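(* Let $n,m_1,m_2\ge1$ be integers, $r>0$, $D\subseteq\mathbb{R}^{m_1}$ compact, $U\subseteq\mathbb{R}^{m_2}$ locally compact with $0\in U$, $W=D\times U$, and let $f:L^\infty([-r,0);\mathbb{R}^n)\times L^\infty([-r,0];D)\times L^\infty([-r,0];U)\to\mathbb{R}^n$ satisfy: (H1) there exist non-decreasing $a,M,N:\mathbb{R}_+\to\mathbb{R}_+$ such that for every $R>0$ and all $x,y\in L^\infty([-r,0);\mathbb{R}^n)$, $w\in L^\infty([-r,0];W)$ with $\|x\|,\|y\|,\|w\|\le R$: $|f(x,w)-f(y,w)|\le N(R)h\sup_{-h\le s<0}|x(s)-y(s)|+M(R)\sup_{-r\le s<-h}|x(s)-y(s)|$ for all $h\in(0,r)$, and $|f(x,w)|\le a(R)$; (H2) for every $\delta>0$, $x\in L^\infty([-r,\delta);\mathbb{R}^n)$, $w\in L^\infty([-r,\delta];W)$, the function equal to $x$ a.e. on $[-r,0)$ and to $t\mapsto f(x_t,w_t)$ a.e. on $[0,\delta)$ belongs to $L^\infty([-r,\delta);\mathbb{R}^n)$; (H3) there exists $b\in K_\infty$ with $|f(x,d,u)|\le b(\max(\|x\|,\sup_{-r\le s\le0}|u(s)|))$ for all $x,d,u$. Assume there exist a continuous, positive definite and radially unbounded function $W:\mathbb{R}^n\to\mathbb{R}_+$, a continuous non-decreasing function $\gamma:\mathbb{R}_+\to\mathbb{R}_+$ and a constant $\lambda\in(0,1)$ such that for all $x\in L^\infty([-r,0);\mathbb{R}^n)$, $d\in L^\infty([-r,0];D)$,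 $u\in L^\infty([-r,0];U)$: $$W(f(x,d,u))\le\lambda\sup_{-r\le s<0}W(x(s))+\gamma(\|u\|).$$ Then the system $x(t)=f(x_t,d_t,u_t)$ is ISS from the input $u\in U$ uniformly in $d\in D$.
   Context: Notation: $\mathbb{R}_+=[0,\infty)$; $L^\infty$, $L^\infty_{loc}$ are spaces of (locally) essentially bounded measurable functions; $\|x\|$ is the essential supremum of the Euclidean norm and $\sup_{a\le s<b}$ means essential supremum; $x_t(s)=x(t+s)$, $s\in[-r,0)$, and $d_t,u_t$ similarly on $[-r,0]$. $K_\infty$: continuous, strictly increasing, zero at zero, unbounded functions $\mathbb{R}_+\to\mathbb{R}_+$. A solution with initial condition $x_0$ and inputs $d,u$ on $[0,T)$ is $x\in L^\infty_{loc}([-r,T);\mathbb{R}^n)$ with $x=x_0$ a.e. on $[-r,0)$ and $x(t)=f(x_t,d_t,u_t)$ for a.e. $t\in[0,T)$; under (H1),(H2) there is a unique maximally defined one, called the solution. Definition (ISS). The system is ISS from the input $u$ uniformly in $d$ if for every $x_0\in L^\infty([-r,0);\mathbb{R}^n)$, $d\in L^\infty([-r,+\infty);D)$, $u\in L^\infty_{loc}([-r,+\infty);U)$ the solution exists on $[0,+\infty)$, and there exists a continuous non-decreasing $\tilde\gamma:\mathbb{R}_+\to\mathbb{R}_+$ such that (all suprema over such $d,u$): for every $\varepsilon>0$, $\sup\{\|x_t\|-\sup_{0\le s\le t}\tilde\gamma(\|u_s\|):t\ge0,\|x_0\|\le\varepsilon\}<+\infty$; for every $\varepsilon>0$ there is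 $\delta>0$ with $\sup\{\|x_t\|-\sup_{0\le s\le t}\tilde\gamma(\|u_s\|):t\ge0,\|x_0\|\le\delta\}<\varepsilon$; for every $\varepsilon>0$, $R\ge0$ there is $\tau>0$ with $\sup\{\|x_t\|-\sup_{0\le s\le t}\tilde\gamma(\|u_s\|):t\ge\tau,\|x_0\|\le R\}<\varepsilon$. *)

theory Defs
  imports "HOL-Analysis.Analysis"
begin

text \<open>Used only for nonnegative, essentially bounded functions on sets of positive measure,
  where it coincides with the usual essential supremum.\<close>
definition ess_sup_on :: "real set \<Rightarrow> (real \<Rightarrow> real) \<Rightarrow> real" where
  "ess_sup_on S g = Inf {c. 0 \<le> c \<and> (AE s in lebesgue. s \<in> S \<longrightarrow> g s \<le> c)}"

definition Lnorm :: "real set \<Rightarrow> (real \<Rightarrow> 'a::real_normed_vector) \<Rightarrow> real" where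
  "Lnorm S g = ess_sup_on S (\<lambda>s. norm (g s))"

definition Linf :: "real set \<Rightarrow> 'a::euclidean_space set \<Rightarrow> (real \<Rightarrow> 'a) \<Rightarrow> bool" where
  "Linf S X g \<longleftrightarrow> set_borel_measurable lebesgue S g \<and>
     (\<exists>B. AE s in lebesgue. s \<in> S \<longrightarrow> g s \<in> X \<and> norm (g s) \<le> B)"

definition Linf_loc :: "real \<Rightarrow> 'a::euclidean_space set \<Rightarrow> (real \<Rightarrow> 'a) \<Rightarrow> bool" where
  "Linf_loc a X g \<longleftrightarrow> (\<forall>T>a. Linf {a..T} X g)"

definition shift :: "(real \<Rightarrow> 'a) \<Rightarrow> real \<Rightarrow> real \<Rightarrow> 'a" where
  "shift x t = (\<lambda>s. x (t + s))"

definition Kinf :: "(real \<Rightarrow> real) \<Rightarrow> bool" where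
  "Kinf b \<longleftrightarrow> continuous_on {0..} b \<and> strict_mono_on {0..} b \<and> b 0 = 0 \<and>
     (\<forall>s\<ge>0. 0 \<le> b s) \<and> filterlim b at_top at_top"

definition nondecr_nonneg :: "(real \<Rightarrow> real) \<Rightarrow> bool" where
  "nondecr_nonneg a \<longleftrightarrow> mono_on {0..} a \<and> (\<forall>s\<ge>0. 0 \<le> a s)"

definition is_solution_inf ::
  "real \<Rightarrow> ((real \<Rightarrow> 'n::euclidean_space) \<Rightarrow> (real \<Rightarrow> 'd) \<Rightarrow> (real \<Rightarrow> 'u) \<Rightarrow> 'n)
   \<Rightarrow> (real \<Rightarrow> 'n) \<Rightarrow> (real \<Rightarrow> 'd) \<Rightarrow> (real \<Rightarrow> 'u) \<Rightarrow> (real \<Rightarrow> 'n) \<Rightarrow> bool" where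
  "is_solution_inf r f x0 d u x \<longleftrightarrow>
     Linf_loc (-r) UNIV x \<and>
     (AE s in lebesgue. s \<in> {-r..<0} \<longrightarrow> x s = x0 s) \<and>
     (AE t in lebesgue. 0 \<le> t \<longrightarrow> x t = f (shift x t) (shift d t) (shift u t))"

definition ISS ::
  "real \<Rightarrow> ((real \<Rightarrow> 'n::euclidean_space) \<Rightarrow> (real \<Rightarrow> 'd::euclidean_space) \<Rightarrow> (real \<Rightarrow> 'u::euclidean_space) \<Rightarrow> 'n)
   \<Rightarrow> 'd set \<Rightarrow> 'u set \<Rightarrow> bool" where
  "ISS r f D U \<longleftrightarrow>
    (let adm = (\<lambda>x0 d u. Linf {-r..<0} UNIV x0 \<and> Linf {-r..} D d \<and> Linf_loc (-r) U u);
         dev = (\<lambda>g x u t. Lnorm {-r..<0} (shift x t) - (SUP s\<in>{0..t}. g (Lnorm {-r..0} (shift u s))))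
     in (\<forall>x0 d u. adm x0 d u \<longrightarrow> (\<exists>x. is_solution_inf r f x0 d u x)) \<and>
        (\<exists>g. continuous_on {0..} g \<and> nondecr_nonneg g \<and>
          (\<forall>\<epsilon>>0. \<exists>C. \<forall>x0 d u x t. adm x0 d u \<and> is_solution_inf r f x0 d u x \<and>
                Lnorm {-r..<0} x0 \<le> \<epsilon> \<and> 0 \<le> t \<longrightarrow> dev g x u t \<le> C) \<and>
          (\<forall>\<epsilon>>0. \<exists>\<delta>>0. \<exists>c<\<epsilon>. \<forall>x0 d u x t. adm x0 d u \<and> is_solution_inf r f x0 d u x \<and>
                Lnorm {-r..<0} x0 \<le> \<delta> \<and> 0 \<le> t \<longrightarrow> dev g x u t \<le> c) \<and>
          (\<forall>\<epsilon>>0. \<forall>R\<ge>0. \<exists>\<tau>>0. \<exists>c<\<epsilon>. \<forall>x0 d u x t. adm x0 d u \<and> is_solution_inf r f x0 d u x \<and>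
                Lnorm {-r..<0} x0 \<le> R \<and> \<tau> \<le> t \<longrightarrow> dev g x u t \<le> c)))"

end

theory Submission
  imports Defs
begin


definition EB :: "real set \<Rightarrow> (real \<Rightarrow> real) \<Rightarrow> bool" where
  "EB S g \<longleftrightarrow> (\<exists>c. AE s in lebesgue. s \<in> S \<longrightarrow> g s \<le> c)"

lemma ess_le:
  assumes "0 \<le> c" "AE s in lebesgue. s \<in> S \<longrightarrow> g s \<le> c"
  shows "ess_sup_on S g \<le> c"
  unfolding ess_sup_on_def using assms
  by (intro cInf_lower) (auto intro: bdd_belowI[of _ 0])

lemma EB_ex: assumes "EB S g" shows "\<exists>c. 0 \<le> c \<and> (AE s in lebesgue. s \<in> S \<longrightarrow> g s \<le> c)"
proof -
  obtain c where "AE s in lebesgue. s \<in> S \<longrightarrow> g s \<le> c" using assms EB_def by auto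
  then have "AE s in lebesgue. s \<in> S \<longrightarrow> g s \<le> max c 0" by eventually_elim auto
  then show ?thesis by (intro exI[of _ "max c 0"]) auto
qed

lemma ess_nonneg: assumes "EB S g" shows "0 \<le> ess_sup_on S g"
  unfolding ess_sup_on_def using EB_ex[OF assms]
  by (intro cInf_greatest) auto

lemma ess_AE:
  assumes "EB S g"
  shows "AE s in lebesgue. s \<in> S \<longrightarrow> g s \<le> ess_sup_on S g"
proof -
  define I where "I = ess_sup_on S g"
  let ?C = "{c. 0 \<le> c \<and> (AE s in lebesgue. s \<in> S \<longrightarrow> g s \<le> c)}"
  have ne: "?C \<noteq> {}" using EB_ex[OF assms] by auto
  have bdd: "bdd_below ?C" by (auto intro: bdd_belowI[of _ 0])
  have "\<forall>n::nat. AE s in lebesgue. s \<in> S \<longrightarrow> g s \<le> I + 1 / real (Suc n)"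
  proof
    fix n :: nat
    have "Inf ?C < I + 1 / real (Suc n)" unfolding I_def ess_sup_on_def by simp
    then obtain c where c: "c \<in> ?C" "c < I + 1 / real (Suc n)"
      using cInf_less_iff[OF ne bdd] by auto
    then have "AE s in lebesgue. s \<in> S \<longrightarrow> g s \<le> c" by simp
    then show "AE s in lebesgue. s \<in> S \<longrightarrow> g s \<le> I + 1 / real (Suc n)"
      by eventually_elim (use c(2) in auto)
  qed
  then have "AE s in lebesgue. \<forall>n::nat. s \<in> S \<longrightarrow> g s \<le> I + 1 / real (Suc n)"
    by (rule AE_all_countable[THEN iffD2])
  then show ?thesis unfolding I_def[symmetric]
  proof eventually_elim
    case (elim s)
    show ?case
    proof
      assume "s \<in> S"
      show "g s \<le> I"
      proof (rule ccontr)
        assume "\<not> g s \<le> I"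
        then obtain n where "1 / real (Suc n) < g s - I"
          using reals_Archimedean[of "g s - I"] by (auto simp: field_simps inverse_eq_divide)
        moreover have "g s \<le> I + 1 / real (Suc n)" using elim \<open>s \<in> S\<close> by blast
        ultimately show False by linarith
      qed
    qed
  qed
qed

lemma ess_le_iff:
  assumes "EB S g"
  shows "ess_sup_on S g \<le> c \<longleftrightarrow> 0 \<le> c \<and> (AE s in lebesgue. s \<in> S \<longrightarrow> g s \<le> c)"
proof
  assume a: "ess_sup_on S g \<le> c"
  have "AE s in lebesgue. s \<in> S \<longrightarrow> g s \<le> c"
    using ess_AE[OF assms] by eventually_elim (use a in auto)
  then show "0 \<le> c \<and> (AE s in lebesgue. s \<in> S \<longrightarrow> g s \<le> c)"
    using ess_nonneg[OF assms] a by auto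
qed (auto intro: ess_le)

lemma EB_mono: assumes "EB S' g" "S \<subseteq> S'" shows "EB S g"
proof -
  obtain c where "AE s in lebesgue. s \<in> S' \<longrightarrow> g s \<le> c" using assms EB_def by auto
  then have "AE s in lebesgue. s \<in> S \<longrightarrow> g s \<le> c" by eventually_elim (use assms in auto)
  then show ?thesis unfolding EB_def by auto
qed

lemma ess_mono_set:
  assumes "EB S' g" "S \<subseteq> S'"
  shows "ess_sup_on S g \<le> ess_sup_on S' g"
proof -
  have "AE s in lebesgue. s \<in> S \<longrightarrow> g s \<le> ess_sup_on S' g"
    using ess_AE[OF assms(1)] by eventually_elim (use assms in auto)
  then show ?thesis by (intro ess_le ess_nonneg assms(1))
qed

lemma AE_translate:
  assumes "AE x in lebesgue. P x"
  shows "AE s in lebesgue. P ((t::real) + s)"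
proof -
  have T: "(\<lambda>x::real. t + x) \<in> lebesgue \<rightarrow>\<^sub>M lebesgue"
    using lebesgue_affine_measurable[where c="\<lambda>_::real. 1" and t=t] by simp
  from assms obtain N where N: "{x \<in> space lebesgue. \<not> P x} \<subseteq> N" "emeasure lebesgue N = 0" "N \<in> sets lebesgue"
    by (auto elim!: AE_E)
  have eq: "lebesgue = density (distr lebesgue lebesgue (\<lambda>x::real. t + 1 * x)) (\<lambda>_. ennreal (abs 1))"
    by (rule lebesgue_real_affine) simp
  then have eq2: "lebesgue = distr lebesgue lebesgue (\<lambda>x::real. t + x)"
    by (simp add: density_1)
  have "emeasure lebesgue N = emeasure (distr lebesgue lebesgue (\<lambda>x::real. t + x)) N"
    using eq2 by simp
  also have "\<dots> = emeasure lebesgue ((\<lambda>x. t + x) -` N \<inter> space lebesgue)"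
    using T N(3) by (rule emeasure_distr)
  finally have z: "emeasure lebesgue ((\<lambda>x. t + x) -` N) = 0" using N by simp
  have m: "(\<lambda>x. t + x) -` N \<in> sets lebesgue"
    using measurable_sets[OF T N(3)] by simp
  show ?thesis
    by (rule AE_I[where N="(\<lambda>x. t + x) -` N"]) (use N z m in auto)
qed

lemma lim_eventually_const:
  assumes "\<forall>m\<ge>n. a m = c" shows "lim a = c"
proof -
  have "eventually (\<lambda>m. a m = c) sequentially" using assms eventually_sequentially by auto
  then have "a \<longlonglongrightarrow> c" by (rule tendsto_eventually)
  then show ?thesis by (rule limI)
qed

lemma translate_meas:
  assumes "g \<in> borel_measurable lebesgue"
  shows "(\<lambda>s. g ((t::real) + s)) \<in> borel_measurable lebesgue"
proof -
  have T: "(\<lambda>x::real. t + x) \<in> lebesgue \<rightarrow>\<^sub>M lebesgue"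
    using lebesgue_affine_measurable[where c="\<lambda>_::real. 1" and t=t] by simp
  show ?thesis using measurable_compose[OF T assms] by (simp add: o_def)
qed

lemma Linf_shift:
  fixes g :: "real \<Rightarrow> 'a::euclidean_space"
  assumes "Linf S X g" "S' \<in> sets lebesgue" "\<And>s. s \<in> S' \<Longrightarrow> t + s \<in> S"
  shows "Linf S' X (shift g t)"
proof -
  have m: "(\<lambda>x. indicator S x *\<^sub>R g x) \<in> borel_measurable lebesgue"
    using assms(1) unfolding Linf_def set_borel_measurable_def by auto
  have "(\<lambda>s. indicator S' s *\<^sub>R (indicator S (t + s) *\<^sub>R g (t + s))) \<in> borel_measurable lebesgue"
    by (rule borel_measurable_scaleR[where f="indicator S'" and g="\<lambda>s. indicator S (t + s) *\<^sub>R g (t + s)"])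
      (use translate_meas[OF m, of t] borel_measurable_indicator[OF assms(2)] in auto)
  moreover have "(\<lambda>s. indicator S' s *\<^sub>R (indicator S (t + s) *\<^sub>R g (t + s))) = (\<lambda>s. indicator S' s *\<^sub>R shift g t s)"
    using assms(3) by (auto simp: shift_def indicator_def fun_eq_iff)
  ultimately have 1: "set_borel_measurable lebesgue S' (shift g t)" by (simp add: set_borel_measurable_def)
  obtain B where B: "AE s in lebesgue. s \<in> S \<longrightarrow> g s \<in> X \<and> norm (g s) \<le> B"
    using assms(1) unfolding Linf_def by auto
  have "AE s in lebesgue. s \<in> S' \<longrightarrow> shift g t s \<in> X \<and> norm (shift g t s) \<le> B"
    using AE_translate[OF B, of t] by eventually_elim (use assms(3) in \<open>auto simp: shift_def\<close>)
  with 1 show ?thesis unfolding Linf_def by auto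
qed

lemma Linf_sub:
  assumes "Linf S X g" "S' \<in> sets lebesgue" "S' \<subseteq> S"
  shows "Linf S' X g"
  using Linf_shift[OF assms(1,2), of 0] assms(3) by (auto simp: shift_def)

lemma Linf_bound:
  assumes "Linf S X g"
  obtains B where "0 \<le> B" "AE s in lebesgue. s \<in> S \<longrightarrow> g s \<in> X \<and> norm (g s) \<le> B"
proof -
  obtain B where B: "AE s in lebesgue. s \<in> S \<longrightarrow> g s \<in> X \<and> norm (g s) \<le> B"
    using assms unfolding Linf_def by auto
  have "AE s in lebesgue. s \<in> S \<longrightarrow> g s \<in> X \<and> norm (g s) \<le> max B 0"
    using B by eventually_elim auto
  then show ?thesis using that[of "max B 0"] by auto
qed

lemma Linf_EB: "Linf S X g \<Longrightarrow> EB S (\<lambda>s. norm (g s))"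
  unfolding EB_def by (erule Linf_bound) (auto elim!: eventually_mono)

lemma Lnorm_le:
  assumes "0 \<le> c" "AE s in lebesgue. s \<in> S \<longrightarrow> norm (g s) \<le> c"
  shows "Lnorm S g \<le> c"
  unfolding Lnorm_def using assms by (rule ess_le)

lemma Lnorm_nonneg: "Linf S X g \<Longrightarrow> 0 \<le> Lnorm S g"
  unfolding Lnorm_def by (rule ess_nonneg[OF Linf_EB])

lemma Linf_meas_global:
  assumes "g \<in> borel_measurable lebesgue" "S \<in> sets lebesgue"
    "AE s in lebesgue. s \<in> S \<longrightarrow> g s \<in> X \<and> norm (g s) \<le> B"
  shows "Linf S X g"
  unfolding Linf_def set_borel_measurable_def using assms by (auto intro!: borel_measurable_scaleR)

lemma geo_conv:
  fixes a :: "nat \<Rightarrow> 'a::banach"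
  assumes A: "\<And>j. norm (a (Suc j) - a j) \<le> K * (1/2)^j"
  shows "convergent a" "\<And>j. norm (lim a - a j) \<le> 2 * K * (1/2)^j"
proof -
  have K0: "norm (a (Suc 0) - a 0) \<le> K" using A[of 0] by simp
  have K: "0 \<le> K" by (rule order_trans[OF norm_ge_zero K0])
  have tail: "norm (a (j + m) - a j) \<le> 2 * K * (1/2)^j - 2 * K * (1/2)^(j+m)" for j m
  proof (induction m)
    case 0 then show ?case by simp
  next
    case (Suc m)
    have "norm (a (j + Suc m) - a j) \<le> norm (a (Suc (j + m)) - a (j + m)) + norm (a (j + m) - a j)"
      using norm_triangle_ineq[of "a (Suc (j + m)) - a (j + m)" "a (j + m) - a j"] by simp
    also have "\<dots> \<le> K * (1/2)^(j+m) + (2 * K * (1/2)^j - 2 * K * (1/2)^(j+m))"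
      using A[of "j+m"] Suc by linarith
    also have "\<dots> = 2 * K * (1/2)^j - 2 * K * (1/2)^(j + Suc m)"
      by (simp add: power_add)
    finally show ?case .
  qed
  have tail2: "norm (a m - a j) \<le> 2 * K * (1/2)^j" if jm: "j \<le> m" for j m
  proof -
    obtain k where mk: "m = j + k" using le_Suc_ex[OF jm] by blast
    have "0 \<le> 2 * K * (1/2::real)^(j+k)" using K by simp
    then show ?thesis using tail[of j k] unfolding mk by linarith
  qed
  have "Cauchy a"
  proof (rule metric_CauchyI)
    fix e :: real assume e: "0 < e"
    obtain J where J: "(1/2::real)^J < e / (4 * K + 1)"
      using real_arch_pow_inv[of "e / (4 * K + 1)" "1/2"] e K by auto
    have "4 * K * (1/2::real)^J \<le> (4 * K + 1) * (1/2)^J" by simp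
    also have "\<dots> < (4 * K + 1) * (e / (4 * K + 1))" using J K by (intro mult_strict_left_mono) auto
    also have "\<dots> = e" using K by simp
    finally have e4: "4 * K * (1/2::real)^J < e" .
    show "\<exists>M. \<forall>m\<ge>M. \<forall>n\<ge>M. dist (a m) (a n) < e"
    proof (intro exI allI impI)
      fix m n assume "J \<le> m" "J \<le> n"
      have "dist (a m) (a n) \<le> norm (a m - a J) + norm (a n - a J)"
      proof -
        have "norm (a m - a n) = norm ((a m - a J) + (a J - a n))" by simp
        also have "\<dots> \<le> norm (a m - a J) + norm (a J - a n)" by (rule norm_triangle_ineq)
        finally show ?thesis by (simp add: dist_norm norm_minus_commute)
      qed
      also have "\<dots> \<le> 2 * K * (1/2)^J + 2 * K * (1/2)^J"
        using tail2 \<open>J \<le> m\<close> \<open>J \<le> n\<close> by (intro add_mono) auto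
      finally show "dist (a m) (a n) < e" using e4 by simp
    qed
  qed
  then show c: "convergent a" by (simp add: Cauchy_convergent_iff)
  fix j
  have "a \<longlonglongrightarrow> lim a" using c by (simp add: convergent_LIMSEQ_iff)
  then have "(\<lambda>m. a (m + j)) \<longlonglongrightarrow> lim a" by (rule LIMSEQ_ignore_initial_segment)
  then have "(\<lambda>m. norm (a (m + j) - a j)) \<longlonglongrightarrow> norm (lim a - a j)"
    by (intro tendsto_intros)
  moreover have "\<forall>m. norm (a (m + j) - a j) \<le> 2 * K * (1/2)^j"
    using tail2 by auto
  ultimately show "norm (lim a - a j) \<le> 2 * K * (1/2)^j"
    by (intro LIMSEQ_le_const2) auto
qed



locale sys =
  fixes r :: real
    and D :: "(real ^ 'm1) set" and U :: "(real ^ 'm2) set"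
    and f :: "(real \<Rightarrow> real ^ 'n) \<Rightarrow> (real \<Rightarrow> real ^ 'm1) \<Rightarrow> (real \<Rightarrow> real ^ 'm2) \<Rightarrow> real ^ 'n"
    and V :: "real ^ 'n \<Rightarrow> real" and \<gamma> :: "real \<Rightarrow> real" and lam :: real
    and a M N :: "real \<Rightarrow> real"
  assumes r_pos: "r > 0"
    and f_welldef: "\<And>x x' d d' u u'. Linf {-r..<0} UNIV x \<Longrightarrow> Linf {-r..<0} UNIV x' \<Longrightarrow>
        Linf {-r..0} D d \<Longrightarrow> Linf {-r..0} D d' \<Longrightarrow> Linf {-r..0} U u \<Longrightarrow> Linf {-r..0} U u' \<Longrightarrow>
        (AE s in lebesgue. s \<in> {-r..<0} \<longrightarrow> x s = x' s) \<Longrightarrow>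
        (AE s in lebesgue. s \<in> {-r..0} \<longrightarrow> d s = d' s) \<Longrightarrow>
        (AE s in lebesgue. s \<in> {-r..0} \<longrightarrow> u s = u' s) \<Longrightarrow> f x d u = f x' d' u'"
    and aMN: "nondecr_nonneg a" "nondecr_nonneg M" "nondecr_nonneg N"
    and H1: "\<forall>R>0. \<forall>x y d u. Linf {-r..<0} UNIV x \<and> Linf {-r..<0} UNIV y \<and>
            Linf {-r..0} D d \<and> Linf {-r..0} U u \<and>
            Lnorm {-r..<0} x \<le> R \<and> Lnorm {-r..<0} y \<le> R \<and>
            Lnorm {-r..0} (\<lambda>s. (d s, u s)) \<le> R \<longrightarrow>
          (\<forall>h\<in>{0<..<r}. norm (f x d u - f y d u) \<le>
              N R * h * Lnorm {-h..<0} (\<lambda>s. x s - y s) + M R * Lnorm {-r..<-h} (\<lambda>s. x s - y s)) \<and>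
          norm (f x d u) \<le> a R"
    and H2: "\<And>\<delta> x d u. \<delta> > 0 \<Longrightarrow> Linf {-r..<\<delta>} UNIV x \<Longrightarrow> Linf {-r..\<delta>} D d \<Longrightarrow> Linf {-r..\<delta>} U u \<Longrightarrow>
        Linf {-r..<\<delta>} UNIV (\<lambda>t. if t < 0 then x t else f (shift x t) (shift d t) (shift u t))"
    and V_cont: "continuous_on UNIV V"
    and V_nonneg: "\<And>z. V z \<ge> 0"
    and V_posdef: "V 0 = 0" "\<And>z. z \<noteq> 0 \<Longrightarrow> V z > 0"
    and V_radunb: "filterlim V at_top at_infinity"
    and \<gamma>_cont: "continuous_on {0..} \<gamma>" and \<gamma>_mono: "nondecr_nonneg \<gamma>"
    and lam_range: "0 < lam" "lam < 1"
    and dissip: "\<And>x d u. Linf {-r..<0} UNIV x \<Longrightarrow> Linf {-r..0} D d \<Longrightarrow> Linf {-r..0} U u \<Longrightarrow>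
        V (f x d u) \<le> lam * ess_sup_on {-r..<0} (\<lambda>s. V (x s)) + \<gamma> (Lnorm {-r..0} u)"
begin

lemma NR_nonneg: "0 \<le> R \<Longrightarrow> 0 \<le> N R" and MR_nonneg: "0 \<le> R \<Longrightarrow> 0 \<le> M R"
  using aMN unfolding nondecr_nonneg_def by auto

lemma contr:
  fixes y z :: "real \<Rightarrow> real ^ 'n"
  assumes y: "Linf {-r..<T} UNIV y" and z: "Linf {-r..<T} UNIV z"
    and d: "Linf {-r..T} D d" and u: "Linf {-r..T} U u"
    and yR: "AE s in lebesgue. s \<in> {-r..<T} \<longrightarrow> norm (y s) \<le> R"
    and zR: "AE s in lebesgue. s \<in> {-r..<T} \<longrightarrow> norm (z s) \<le> R"
    and duR: "AE s in lebesgue. s \<in> {-r..T} \<longrightarrow> norm (d s, u s) \<le> R"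
    and R: "R > 0"
    and eq0: "AE s in lebesgue. s \<in> {-r..<0} \<longrightarrow> y s = z s"
    and dif: "AE s in lebesgue. s \<in> {0..<T} \<longrightarrow> norm (y s - z s) \<le> c * exp (\<beta> * s)"
    and c: "0 \<le> c" and \<beta>: "0 \<le> \<beta>" and h: "0 < h" "h < r"
    and hN: "N R * h \<le> 1/4" and hM: "M R * exp (-\<beta>*h) \<le> 1/4"
    and t: "0 \<le> t" "t < T"
  shows "norm (f (shift y t) (shift d t) (shift u t) - f (shift z t) (shift d t) (shift u t)) \<le> c / 2 * exp (\<beta> * t)"
proof -
  have sy: "Linf {-r..<0} UNIV (shift y t)" by (rule Linf_shift[OF y]) (use t in auto)
  have sz: "Linf {-r..<0} UNIV (shift z t)" by (rule Linf_shift[OF z]) (use t in auto)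
  have sd: "Linf {-r..0} D (shift d t)" by (rule Linf_shift[OF d]) (use t in auto)
  have su: "Linf {-r..0} U (shift u t)" by (rule Linf_shift[OF u]) (use t in auto)
  have "AE s in lebesgue. s \<in> {-r..<0} \<longrightarrow> norm (shift y t s) \<le> R"
    using AE_translate[OF yR, of t] by eventually_elim (use t in \<open>auto simp: shift_def\<close>)
  then have nyR: "Lnorm {-r..<0} (shift y t) \<le> R" using R by (intro Lnorm_le) auto
  have "AE s in lebesgue. s \<in> {-r..<0} \<longrightarrow> norm (shift z t s) \<le> R"
    using AE_translate[OF zR, of t] by eventually_elim (use t in \<open>auto simp: shift_def\<close>)
  then have nzR: "Lnorm {-r..<0} (shift z t) \<le> R" using R by (intro Lnorm_le) auto
  have "AE s in lebesgue. s \<in> {-r..0} \<longrightarrow> norm (shift d t s, shift u t s) \<le> R"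
    using AE_translate[OF duR, of t] by eventually_elim (use t in \<open>auto simp: shift_def\<close>)
  then have nduR: "Lnorm {-r..0} (\<lambda>s. (shift d t s, shift u t s)) \<le> R" using R by (intro Lnorm_le) auto
  have Hh: "norm (f (shift y t) (shift d t) (shift u t) - f (shift z t) (shift d t) (shift u t)) \<le>
      N R * h * Lnorm {-h..<0} (\<lambda>s. shift y t s - shift z t s) + M R * Lnorm {-r..<-h} (\<lambda>s. shift y t s - shift z t s)"
  proof -
    have "(\<forall>h\<in>{0<..<r}. norm (f (shift y t) (shift d t) (shift u t) - f (shift z t) (shift d t) (shift u t)) \<le>
      N R * h * Lnorm {-h..<0} (\<lambda>s. shift y t s - shift z t s) + M R * Lnorm {-r..<-h} (\<lambda>s. shift y t s - shift z t s))"
      using H1[rule_format, OF R, of "shift y t" "shift z t" "shift d t" "shift u t"] sy sz sd su nyR nzR nduR by simp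
    then show ?thesis using h by simp
  qed
  have gen: "AE \<tau> in lebesgue. \<tau> \<in> {-r..<T} \<and> \<tau> < s0 \<longrightarrow> norm (y \<tau> - z \<tau>) \<le> c * exp (\<beta> * s0)"
    if "s0 \<le> t" for s0
    using eq0 dif
  proof eventually_elim
    case (elim \<tau>)
    show ?case
    proof
      assume a: "\<tau> \<in> {-r..<T} \<and> \<tau> < s0"
      show "norm (y \<tau> - z \<tau>) \<le> c * exp (\<beta> * s0)"
      proof (cases "\<tau> < 0")
        case True then show ?thesis using elim a c by auto
      next
        case False
        then have "norm (y \<tau> - z \<tau>) \<le> c * exp (\<beta> * \<tau>)" using elim a that t by auto
        also have "\<dots> \<le> c * exp (\<beta> * s0)" using a \<beta> c by (intro mult_left_mono) (auto intro: mult_left_mono)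
        finally show ?thesis .
      qed
    qed
  qed
  have "AE s in lebesgue. s \<in> {-h..<0} \<longrightarrow> norm (shift y t s - shift z t s) \<le> c * exp (\<beta> * t)"
    using AE_translate[OF gen[OF order_refl], of t] by eventually_elim (use t h in \<open>auto simp: shift_def\<close>)
  then have L1: "Lnorm {-h..<0} (\<lambda>s. shift y t s - shift z t s) \<le> c * exp (\<beta> * t)"
    using c by (intro Lnorm_le) auto
  have th: "t - h \<le> t" using h by simp
  have "AE s in lebesgue. s \<in> {-r..<-h} \<longrightarrow> norm (shift y t s - shift z t s) \<le> c * exp (\<beta> * (t - h))"
    using AE_translate[OF gen[of "t - h", OF th], of t] by eventually_elim (use t h in \<open>auto simp: shift_def\<close>)
  then have L2: "Lnorm {-r..<-h} (\<lambda>s. shift y t s - shift z t s) \<le> c * exp (\<beta> * (t - h))"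
    using c by (intro Lnorm_le) auto
  have NR: "0 \<le> N R" "0 \<le> M R" using R NR_nonneg MR_nonneg by auto
  have "N R * h * Lnorm {-h..<0} (\<lambda>s. shift y t s - shift z t s) \<le> N R * h * (c * exp (\<beta> * t))"
    using L1 NR h by (intro mult_left_mono) auto
  moreover have "M R * Lnorm {-r..<-h} (\<lambda>s. shift y t s - shift z t s) \<le> M R * (c * exp (\<beta> * (t - h)))"
    using L2 NR by (intro mult_left_mono) auto
  moreover have "exp (\<beta> * (t - h)) = exp (\<beta> * t) * exp (-\<beta> * h)"
    by (simp add: exp_add[symmetric] algebra_simps)
  moreover have "c * exp (\<beta> * t) * (N R * h + M R * exp (-\<beta> * h)) \<le> c * exp (\<beta> * t) * (1/2)"
    using hN hM c by (intro mult_left_mono) auto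
  moreover have "N R * h * (c * exp (\<beta> * t)) + M R * (c * (exp (\<beta> * t) * exp (-\<beta> * h))) =
     c * exp (\<beta> * t) * (N R * h + M R * exp (-\<beta> * h))"
    by (simp add: algebra_simps)
  ultimately show ?thesis using Hh by auto
qed

end

context sys begin

lemma hb_exists:
  assumes R: "R > 0"
  shows "\<exists>h \<beta>. 0 < h \<and> h < r \<and> 0 \<le> \<beta> \<and> N R * h \<le> 1/4 \<and> M R * exp (-\<beta>*h) \<le> 1/4"
proof -
  have NR: "0 \<le> N R" "0 \<le> M R" using R NR_nonneg MR_nonneg by auto
  define h where "h = min (r/2) (1 / (4 * N R + 4))"
  have h: "0 < h" "h < r" using r_pos NR by (auto simp: h_def)
  have "N R * h \<le> N R * (1 / (4 * N R + 4))" using NR by (intro mult_left_mono) (auto simp: h_def)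
  also have "\<dots> \<le> 1/4" using NR by (simp add: field_simps)
  finally have hN: "N R * h \<le> 1/4" .
  define \<beta> where "\<beta> = ln (4 * M R + 1) / h"
  have \<beta>: "0 \<le> \<beta>" using NR h by (auto simp: \<beta>_def)
  have "exp (-\<beta> * h) = 1 / (4 * M R + 1)"
    using h NR by (simp add: \<beta>_def exp_minus exp_ln inverse_eq_divide)
  then have "M R * exp (-\<beta>*h) = M R / (4 * M R + 1)" by simp
  also have "\<dots> \<le> 1/4" using NR by (simp add: field_simps)
  finally have "M R * exp (-\<beta>*h) \<le> 1/4" .
  then show ?thesis using h hN \<beta> by blast
qed

lemma V_level: "\<exists>R. \<forall>z. V z \<le> L \<longrightarrow> norm z \<le> R"
proof -
  have "eventually (\<lambda>z. V z > L) at_infinity"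
    using V_radunb by (simp add: filterlim_at_top_dense)
  then obtain b where b: "\<And>z. b \<le> norm z \<Longrightarrow> V z > L" by (auto simp: eventually_at_infinity)
  show ?thesis
    by (rule exI[of _ b]) (meson b linorder_not_le less_imp_le not_less)
qed

lemma V_ball: "\<exists>S\<ge>0. \<forall>z. norm z \<le> B \<longrightarrow> V z \<le> S"
proof -
  have "compact (V ` cball 0 B)"
    using V_cont by (intro compact_continuous_image) (auto intro: continuous_on_subset)
  then obtain S where S: "\<And>w. w \<in> V ` cball 0 B \<Longrightarrow> norm w \<le> S"
    using compact_imp_bounded bounded_iff by metis
  show ?thesis
    by (rule exI[of _ "max S 0"]) (use S in \<open>force simp: dist_norm\<close>)
qed

end


lemma small_le:
  assumes "\<And>j. x \<le> K * (1/2::real)^j"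
  shows "x \<le> 0"
proof -
  have "(\<lambda>j. K * (1/2::real)^j) \<longlonglongrightarrow> K * 0"
    by (intro tendsto_mult tendsto_const LIMSEQ_power_zero) auto
  then show ?thesis using assms by (intro LIMSEQ_le_const[of _ 0]) auto
qed

context sys begin

lemma exist_T:
  fixes x0 :: "real \<Rightarrow> real ^ 'n"
  assumes x0: "Linf {-r..<0} UNIV x0" and d: "Linf {-r..T} D d" and u: "Linf {-r..T} U u" and T: "T > 0"
  shows "\<exists>y. Linf {-r..<T} UNIV y \<and> (\<forall>s<0. y s = x0 s) \<and>
     (AE t in lebesgue. t \<in> {0..<T} \<longrightarrow> y t = f (shift y t) (shift d t) (shift u t))"
proof -
  obtain Bx where Bx: "0 \<le> Bx" "AE s in lebesgue. s \<in> {-r..<0} \<longrightarrow> x0 s \<in> UNIV \<and> norm (x0 s) \<le> Bx"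
    using Linf_bound[OF x0] by blast
  obtain Bd where Bd: "0 \<le> Bd" "AE s in lebesgue. s \<in> {-r..T} \<longrightarrow> d s \<in> D \<and> norm (d s) \<le> Bd"
    using Linf_bound[OF d] by blast
  obtain Bu where Bu: "0 \<le> Bu" "AE s in lebesgue. s \<in> {-r..T} \<longrightarrow> u s \<in> U \<and> norm (u s) \<le> Bu"
    using Linf_bound[OF u] by blast
  obtain S0 where S0: "0 \<le> S0" "\<And>z. norm z \<le> Bx \<Longrightarrow> V z \<le> S0"
    using V_ball[of Bx] by blast
  have lam1: "0 < 1 - lam" using lam_range by simp
  have gBu: "0 \<le> \<gamma> Bu" using \<gamma>_mono Bu(1) unfolding nondecr_nonneg_def by auto
  define L where "L = max S0 (\<gamma> Bu / (1 - lam))"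
  have L0: "0 \<le> L" using S0 by (simp add: L_def)
  have "\<gamma> Bu = (1 - lam) * (\<gamma> Bu / (1 - lam))" using lam1 by simp
  also have "\<dots> \<le> (1 - lam) * L" using lam1 by (intro mult_left_mono) (auto simp: L_def)
  finally have Lfix: "lam * L + \<gamma> Bu \<le> L" by (simp add: algebra_simps)
  obtain RL where RL: "\<And>z. V z \<le> L \<Longrightarrow> norm z \<le> RL" using V_level[of L] by blast
  define R where "R = max (max RL (Bd + Bu)) 1"
  have R: "R > 0" by (simp add: R_def)
  obtain h \<beta> where h: "0 < h" "h < r" and \<beta>: "0 \<le> \<beta>" and hN: "N R * h \<le> 1/4" and hM: "M R * exp (-\<beta>*h) \<le> 1/4"
    using hb_exists[OF R] by blast
  define C where "C = {y. Linf {-r..<T} UNIV y \<and> (\<forall>s<0. y s = x0 s) \<and>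
     (AE s in lebesgue. s \<in> {-r..<T} \<longrightarrow> V (y s) \<le> L)}"
  define \<Psi> where "\<Psi> y = (\<lambda>t. if t < 0 then x0 t else f (shift y t) (shift d t) (shift u t))" for y
  have x0L: "AE s in lebesgue. s \<in> {-r..<0} \<longrightarrow> V (x0 s) \<le> L"
    using Bx(2) by eventually_elim (use S0 in \<open>auto simp: L_def intro: le_max_iff_disj[THEN iffD2]\<close>)
  have normC: "AE s in lebesgue. s \<in> {-r..<T} \<longrightarrow> norm (y s) \<le> R" if "y \<in> C" for y
  proof -
    have "AE s in lebesgue. s \<in> {-r..<T} \<longrightarrow> V (y s) \<le> L" using that by (simp add: C_def)
    then show ?thesis by eventually_elim (use RL in \<open>force simp: R_def\<close>)
  qed
  have duR: "AE s in lebesgue. s \<in> {-r..T} \<longrightarrow> norm (d s, u s) \<le> R"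
    using Bd(2) Bu(2)
  proof eventually_elim
    case (elim s)
    show ?case using elim norm_Pair_le[of "d s" "u s"] by (auto simp: R_def)
  qed
  have ulnorm: "Lnorm {-r..0} (shift u t) \<le> Bu" if "t \<in> {0..T}" for t
  proof -
    have "AE s in lebesgue. s \<in> {-r..0} \<longrightarrow> norm (shift u t s) \<le> Bu"
      using AE_translate[OF Bu(2), of t] by eventually_elim (use that in \<open>auto simp: shift_def\<close>)
    then show ?thesis using Bu(1) by (intro Lnorm_le) auto
  qed
  have sd: "Linf {-r..0} D (shift d t)" if "t \<in> {0..<T}" for t by (rule Linf_shift[OF d]) (use that in auto)
  have su: "Linf {-r..0} U (shift u t)" if "t \<in> {0..<T}" for t by (rule Linf_shift[OF u]) (use that in auto)
  have sy: "Linf {-r..<0} UNIV (shift y t)" if "y \<in> C" "t \<in> {0..<T}" for y t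
    by (rule Linf_shift[of "{-r..<T}"]) (use that in \<open>auto simp: C_def\<close>)
  have fL: "V (f (shift y t) (shift d t) (shift u t)) \<le> L" if "y \<in> C" "t \<in> {0..<T}" for y t
  proof -
    have A1: "AE s in lebesgue. s \<in> {-r..<T} \<longrightarrow> V (y s) \<le> L" using that(1) by (simp add: C_def)
    have "AE s in lebesgue. s \<in> {-r..<0} \<longrightarrow> V (shift y t s) \<le> L"
      using AE_translate[OF A1, of t] by eventually_elim (use that(2) in \<open>auto simp: shift_def\<close>)
    then have E: "ess_sup_on {-r..<0} (\<lambda>s. V (shift y t s)) \<le> L" using L0 by (intro ess_le) auto
    have Ln: "0 \<le> Lnorm {-r..0} (shift u t)" by (rule Lnorm_nonneg[OF su[OF that(2)]])
    have G: "\<gamma> (Lnorm {-r..0} (shift u t)) \<le> \<gamma> Bu"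
      using \<gamma>_mono ulnorm[of t] that(2) Ln Bu(1) unfolding nondecr_nonneg_def mono_on_def by auto
    have "V (f (shift y t) (shift d t) (shift u t)) \<le> lam * ess_sup_on {-r..<0} (\<lambda>s. V (shift y t s)) + \<gamma> (Lnorm {-r..0} (shift u t))"
      by (rule dissip[OF sy[OF that] sd[OF that(2)] su[OF that(2)]])
    also have "\<dots> \<le> lam * L + \<gamma> Bu" using E lam_range G by (intro add_mono mult_left_mono) auto
    also have "\<dots> \<le> L" by (rule Lfix)
    finally show ?thesis .
  qed
  have \<Psi>C: "\<Psi> y \<in> C" if "y \<in> C" for y
  proof -
    have yL: "Linf {-r..<T} UNIV y" using that by (simp add: C_def)
    have "Linf {-r..<T} UNIV (\<lambda>t. if t < 0 then y t else f (shift y t) (shift d t) (shift u t))"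
      by (rule H2[OF T yL d u])
    moreover have "(\<lambda>t. if t < 0 then y t else f (shift y t) (shift d t) (shift u t)) = \<Psi> y"
      using that by (auto simp: C_def \<Psi>_def fun_eq_iff)
    ultimately have 1: "Linf {-r..<T} UNIV (\<Psi> y)" by simp
    have "AE s in lebesgue. s \<in> {-r..<T} \<longrightarrow> V (\<Psi> y s) \<le> L"
      using x0L by eventually_elim (use fL[OF that] in \<open>auto simp: \<Psi>_def\<close>)
    with 1 show ?thesis by (auto simp: C_def \<Psi>_def)
  qed
  have contrC: "norm (\<Psi> y t - \<Psi> z t) \<le> c / 2 * exp (\<beta> * t)"
    if "y \<in> C" "z \<in> C" "0 \<le> c" "AE s in lebesgue. s \<in> {0..<T} \<longrightarrow> norm (y s - z s) \<le> c * exp (\<beta> * s)"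
       "t \<in> {0..<T}" for y z c t
  proof -
    have "norm (f (shift y t) (shift d t) (shift u t) - f (shift z t) (shift d t) (shift u t)) \<le> c / 2 * exp (\<beta> * t)"
    proof (rule contr[of T y z d u R c \<beta> h])
      show "Linf {-r..<T} UNIV y" "Linf {-r..<T} UNIV z" using that by (auto simp: C_def)
      show "AE s in lebesgue. s \<in> {-r..<0} \<longrightarrow> y s = z s" using that by (auto simp: C_def)
    qed (use that d u normC duR R h \<beta> hN hM in auto)
    then show ?thesis using that(5) by (simp add: \<Psi>_def)
  qed
  define y0 where "y0 = (\<lambda>s. if s < 0 then x0 s else 0)"
  have y0C: "y0 \<in> C"
  proof -
    have m: "(\<lambda>s. indicator {-r..<0} s *\<^sub>R x0 s) \<in> borel_measurable lebesgue"
      using x0 unfolding Linf_def set_borel_measurable_def by auto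
    have "(\<lambda>s. indicator {-r..<T} s *\<^sub>R y0 s) = (\<lambda>s. indicator {-r..<0} s *\<^sub>R x0 s)"
      using T by (auto simp: y0_def indicator_def fun_eq_iff)
    with m have m2: "set_borel_measurable lebesgue {-r..<T} y0" by (simp add: set_borel_measurable_def)
    have "AE s in lebesgue. s \<in> {-r..<T} \<longrightarrow> y0 s \<in> UNIV \<and> norm (y0 s) \<le> Bx"
      using Bx(2) by eventually_elim (use Bx(1) in \<open>auto simp: y0_def\<close>)
    with m2 have "Linf {-r..<T} UNIV y0" unfolding Linf_def by blast
    moreover have "AE s in lebesgue. s \<in> {-r..<T} \<longrightarrow> V (y0 s) \<le> L"
      using x0L by eventually_elim (use L0 V_posdef(1) in \<open>auto simp: y0_def\<close>)
    ultimately show ?thesis by (auto simp: C_def y0_def)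
  qed
  define ys where "ys j = (\<Psi> ^^ j) y0" for j
  have ysS: "ys (Suc j) = \<Psi> (ys j)" for j by (simp add: ys_def)
  have ysC: "ys j \<in> C" for j
    by (induction j) (auto simp: ys_def y0C \<Psi>C)
  have diff: "AE s in lebesgue. s \<in> {0..<T} \<longrightarrow> norm (ys (Suc j) s - ys j s) \<le> (2 * R * (1/2)^j) * exp (\<beta> * s)" for j
  proof (induction j)
    case 0
    show ?case using normC[OF ysC[of 1]] normC[OF ysC[of 0]]
    proof eventually_elim
      case (elim s)
      show ?case
      proof
        assume s: "s \<in> {0..<T}"
        then have "1 \<le> exp (\<beta> * s)" using \<beta> by simp
        moreover have "norm (ys 1 s - ys 0 s) \<le> 2 * R"
          using elim s norm_triangle_ineq4[of "ys 1 s" "ys 0 s"] r_pos by auto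
        moreover have "2 * R * 1 \<le> 2 * R * exp (\<beta> * s)"
          using R \<open>1 \<le> exp (\<beta> * s)\<close> by (intro mult_left_mono) auto
        ultimately show "norm (ys (Suc 0) s - ys 0 s) \<le> (2 * R * (1/2)^0) * exp (\<beta> * s)"
          by simp
      qed
    qed
  next
    case (Suc j)
    have "norm (ys (Suc (Suc j)) t - ys (Suc j) t) \<le> (2 * R * (1/2)^(Suc j)) * exp (\<beta> * t)"
      if "t \<in> {0..<T}" for t
      using contrC[OF ysC[of "Suc j"] ysC[of j] _ Suc that] R by (simp add: ysS)
    then show ?case by (intro AE_I2) auto
  qed
  have diffall: "AE s in lebesgue. \<forall>j. s \<in> {0..<T} \<longrightarrow> norm (ys (Suc j) s - ys j s) \<le> (2 * R * (1/2)^j) * exp (\<beta> * s)"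
    using diff by (rule AE_all_countable[THEN iffD2, OF allI])
  have lvlall: "AE s in lebesgue. \<forall>j. s \<in> {-r..<T} \<longrightarrow> V (ys j s) \<le> L"
    using ysC by (intro AE_all_countable[THEN iffD2, OF allI]) (simp add: C_def)
  define y where "y s = lim (\<lambda>j. ys j s)" for s
  have neg: "y s = x0 s" if "s < 0" for s
    unfolding y_def by (rule lim_eventually_const[of 0]) (use ysC that in \<open>auto simp: C_def\<close>)
  have conv: "AE s in lebesgue. s \<in> {0..<T} \<longrightarrow> (\<lambda>j. ys j s) \<longlonglongrightarrow> y s \<and>
      (\<forall>j. norm (y s - ys j s) \<le> (4 * R * (1/2)^j) * exp (\<beta> * s))"
    using diffall
  proof eventually_elim
    case (elim s)
    show ?case
    proof
      assume s: "s \<in> {0..<T}"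
      have A: "norm (ys (Suc j) s - ys j s) \<le> (2 * R * exp (\<beta> * s)) * (1/2)^j" for j
        using elim s by (simp add: algebra_simps)
      have "convergent (\<lambda>j. ys j s)" by (rule geo_conv(1)[OF A])
      then have "(\<lambda>j. ys j s) \<longlonglongrightarrow> y s" by (simp add: y_def convergent_LIMSEQ_iff)
      moreover have "norm (y s - ys j s) \<le> (4 * R * (1/2)^j) * exp (\<beta> * s)" for j
        using geo_conv(2)[OF A, of j] by (simp add: y_def algebra_simps)
      ultimately show "(\<lambda>j. ys j s) \<longlonglongrightarrow> y s \<and> (\<forall>j. norm (y s - ys j s) \<le> (4 * R * (1/2)^j) * exp (\<beta> * s))"
        by blast
    qed
  qed
  have ylvl: "AE s in lebesgue. s \<in> {-r..<T} \<longrightarrow> V (y s) \<le> L"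
    using lvlall conv x0L
  proof eventually_elim
    case (elim s)
    show ?case
    proof
      assume s: "s \<in> {-r..<T}"
      show "V (y s) \<le> L"
      proof (cases "s < 0")
        case True then show ?thesis using elim s neg by auto
      next
        case False
        then have "(\<lambda>j. ys j s) \<longlonglongrightarrow> y s" using elim s by auto
        moreover have "isCont V (y s)" using V_cont by (simp add: continuous_on_eq_continuous_at)
        ultimately have "(\<lambda>j. V (ys j s)) \<longlonglongrightarrow> V (y s)" by (rule isCont_tendsto_compose[rotated])
        then show ?thesis using elim s by (intro LIMSEQ_le_const2) auto
      qed
    qed
  qed
  have ymeas: "set_borel_measurable lebesgue {-r..<T} y"
  proof -
    have m: "(\<lambda>s. indicator {-r..<T} s *\<^sub>R ys j s) \<in> borel_measurable lebesgue" for j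
      using ysC[of j] unfolding C_def Linf_def set_borel_measurable_def by auto
    have "(\<lambda>s. lim (\<lambda>j. indicator {-r..<T} s *\<^sub>R ys j s)) \<in> borel_measurable lebesgue"
      by (rule borel_measurable_lim_metric[OF m])
    moreover have "(\<lambda>s. lim (\<lambda>j. indicator {-r..<T} s *\<^sub>R ys j s)) = (\<lambda>s. indicator {-r..<T} s *\<^sub>R y s)"
    proof
      fix s
      show "lim (\<lambda>j. indicator {-r..<T} s *\<^sub>R ys j s) = indicator {-r..<T} s *\<^sub>R y s"
        by (cases "s \<in> {-r..<T}") (auto simp: y_def intro: lim_eventually_const[of 0])
    qed
    ultimately show ?thesis by (simp add: set_borel_measurable_def)
  qed
  have yC: "y \<in> C"
  proof -
    have "AE s in lebesgue. s \<in> {-r..<T} \<longrightarrow> y s \<in> UNIV \<and> norm (y s) \<le> RL"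
      using ylvl by eventually_elim (use RL in auto)
    with ymeas have "Linf {-r..<T} UNIV y" unfolding Linf_def by blast
    with ylvl neg show ?thesis by (auto simp: C_def)
  qed
  have fixp: "AE t in lebesgue. t \<in> {0..<T} \<longrightarrow> y t = \<Psi> y t"
    using conv
  proof eventually_elim
    case (elim t)
    show ?case
    proof
      assume t: "t \<in> {0..<T}"
      have bnd: "AE s in lebesgue. s \<in> {0..<T} \<longrightarrow> norm (y s - ys j s) \<le> (4 * R * (1/2)^j) * exp (\<beta> * s)" for j
        using conv by eventually_elim auto
      have "norm (y t - \<Psi> y t) \<le> (4 * R * exp (\<beta> * t)) * (1/2)^j" for j
      proof -
        have "norm (\<Psi> y t - ys (Suc j) t) \<le> (4 * R * (1/2)^j) / 2 * exp (\<beta> * t)"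
          using contrC[OF yC ysC[of j] _ bnd[of j] t] R by (simp add: ysS)
        moreover have "norm (y t - ys (Suc j) t) \<le> (4 * R * (1/2)^(Suc j)) * exp (\<beta> * t)"
          using elim t by blast
        moreover have "norm (y t - \<Psi> y t) \<le> norm (y t - ys (Suc j) t) + norm (\<Psi> y t - ys (Suc j) t)"
          by (rule norm_diff_triangle_le[where y="ys (Suc j) t"]) (auto simp: norm_minus_commute)
        ultimately show ?thesis by (simp add: algebra_simps)
      qed
      then have "norm (y t - \<Psi> y t) \<le> 0" by (rule small_le)
      then show "y t = \<Psi> y t" by simp
    qed
  qed
  show ?thesis
  proof (intro exI conjI)
    show "Linf {-r..<T} UNIV y" "\<forall>s<0. y s = x0 s" using yC by (auto simp: C_def)
    show "AE t in lebesgue. t \<in> {0..<T} \<longrightarrow> y t = f (shift y t) (shift d t) (shift u t)"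
      using fixp by eventually_elim (auto simp: \<Psi>_def)
  qed
qed

end

context sys begin

lemma uniq:
  fixes z1 z2 :: "real \<Rightarrow> real ^ 'n"
  assumes z1: "Linf {-r..<T} UNIV z1" and z2: "Linf {-r..<T} UNIV z2"
    and d: "Linf {-r..T} D d" and u: "Linf {-r..T} U u"
    and e0: "AE s in lebesgue. s \<in> {-r..<0} \<longrightarrow> z1 s = z2 s"
    and f1: "AE t in lebesgue. t \<in> {0..<T} \<longrightarrow> z1 t = f (shift z1 t) (shift d t) (shift u t)"
    and f2: "AE t in lebesgue. t \<in> {0..<T} \<longrightarrow> z2 t = f (shift z2 t) (shift d t) (shift u t)"
  shows "AE s in lebesgue. s \<in> {-r..<T} \<longrightarrow> z1 s = z2 s"
proof -
  obtain B1 where B1: "0 \<le> B1" "AE s in lebesgue. s \<in> {-r..<T} \<longrightarrow> z1 s \<in> UNIV \<and> norm (z1 s) \<le> B1"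
    using Linf_bound[OF z1] by blast
  obtain B2 where B2: "0 \<le> B2" "AE s in lebesgue. s \<in> {-r..<T} \<longrightarrow> z2 s \<in> UNIV \<and> norm (z2 s) \<le> B2"
    using Linf_bound[OF z2] by blast
  obtain Bd where Bd: "0 \<le> Bd" "AE s in lebesgue. s \<in> {-r..T} \<longrightarrow> d s \<in> D \<and> norm (d s) \<le> Bd"
    using Linf_bound[OF d] by blast
  obtain Bu where Bu: "0 \<le> Bu" "AE s in lebesgue. s \<in> {-r..T} \<longrightarrow> u s \<in> U \<and> norm (u s) \<le> Bu"
    using Linf_bound[OF u] by blast
  define R where "R = max (B1 + B2 + Bd + Bu) 1"
  have R: "R > 0" by (simp add: R_def)
  have z1R: "AE s in lebesgue. s \<in> {-r..<T} \<longrightarrow> norm (z1 s) \<le> R"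
    using B1(2) by eventually_elim (use B1(1) B2(1) Bd(1) Bu(1) in \<open>auto simp: R_def\<close>)
  have z2R: "AE s in lebesgue. s \<in> {-r..<T} \<longrightarrow> norm (z2 s) \<le> R"
    using B2(2) by eventually_elim (use B1(1) B2(1) Bd(1) Bu(1) in \<open>auto simp: R_def\<close>)
  have duR: "AE s in lebesgue. s \<in> {-r..T} \<longrightarrow> norm (d s, u s) \<le> R"
    using Bd(2) Bu(2)
  proof eventually_elim
    case (elim s)
    show ?case using elim norm_Pair_le[of "d s" "u s"] B1(1) B2(1) by (auto simp: R_def)
  qed
  obtain h \<beta> where h: "0 < h" "h < r" and \<beta>: "0 \<le> \<beta>" and hN: "N R * h \<le> 1/4" and hM: "M R * exp (-\<beta>*h) \<le> 1/4"
    using hb_exists[OF R] by blast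
  have step: "AE s in lebesgue. s \<in> {0..<T} \<longrightarrow> norm (z1 s - z2 s) \<le> (2 * R * (1/2)^k) * exp (\<beta> * s)" for k
  proof (induction k)
    case 0
    show ?case using z1R z2R
    proof eventually_elim
      case (elim s)
      show ?case
      proof
        assume s: "s \<in> {0..<T}"
        then have "1 \<le> exp (\<beta> * s)" using \<beta> by simp
        moreover have "norm (z1 s - z2 s) \<le> 2 * R"
          using elim s norm_triangle_ineq4[of "z1 s" "z2 s"] r_pos by auto
        moreover have "2 * R * 1 \<le> 2 * R * exp (\<beta> * s)"
          using R \<open>1 \<le> exp (\<beta> * s)\<close> by (intro mult_left_mono) auto
        ultimately show "norm (z1 s - z2 s) \<le> (2 * R * (1/2)^0) * exp (\<beta> * s)"
          by simp
      qed
    qed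
  next
    case (Suc k)
    have c: "norm (f (shift z1 t) (shift d t) (shift u t) - f (shift z2 t) (shift d t) (shift u t)) \<le> (2 * R * (1/2)^k) / 2 * exp (\<beta> * t)"
      if "t \<in> {0..<T}" for t
      by (rule contr[of T z1 z2 d u R "2 * R * (1/2)^k" \<beta> h])
         (use z1 z2 d u z1R z2R duR R e0 Suc h \<beta> hN hM that in auto)
    show ?case using f1 f2
    proof eventually_elim
      case (elim t)
      show ?case
      proof
        assume t: "t \<in> {0..<T}"
        show "norm (z1 t - z2 t) \<le> (2 * R * (1/2)^Suc k) * exp (\<beta> * t)"
          using c[OF t] elim t by simp
      qed
    qed
  qed
  have "AE s in lebesgue. \<forall>k. s \<in> {0..<T} \<longrightarrow> norm (z1 s - z2 s) \<le> (2 * R * (1/2)^k) * exp (\<beta> * s)"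
    using step by (rule AE_all_countable[THEN iffD2, OF allI])
  then show ?thesis using e0
  proof eventually_elim
    case (elim s)
    show ?case
    proof
      assume s: "s \<in> {-r..<T}"
      show "z1 s = z2 s"
      proof (cases "s < 0")
        case True then show ?thesis using elim s by auto
      next
        case False
        then have "norm (z1 s - z2 s) \<le> (2 * R * exp (\<beta> * s)) * (1/2)^k" for k
          using elim s by (simp add: algebra_simps)
        then have "norm (z1 s - z2 s) \<le> 0" by (rule small_le)
        then show ?thesis by simp
      qed
    qed
  qed
qed

end

context sys begin

lemma exist_global:
  fixes x0 :: "real \<Rightarrow> real ^ 'n"
  assumes x0: "Linf {-r..<0} UNIV x0" and d: "Linf {-r..} D d" and u: "Linf_loc (-r) U u"
  shows "\<exists>x. is_solution_inf r f x0 d u x"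
proof -
  have dT: "Linf {-r..T} D d" for T by (rule Linf_sub[OF d]) auto
  have uT: "Linf {-r..T} U u" if "T > -r" for T using u that by (simp add: Linf_loc_def)
  define P where "P n y \<longleftrightarrow> Linf {-r..<real (Suc n)} UNIV y \<and> (\<forall>s<0. y s = x0 s) \<and>
     (AE t in lebesgue. t \<in> {0..<real (Suc n)} \<longrightarrow> y t = f (shift y t) (shift d t) (shift u t))" for n y
  have "\<forall>n. \<exists>y. P n y"
  proof
    fix n
    have "real (Suc n) > -r" using r_pos by (smt (verit) of_nat_0_le_iff)
    then show "\<exists>y. P n y" unfolding P_def by (intro exist_T[OF x0 dT uT]) auto
  qed
  then obtain ys where ys: "\<And>n. P n (ys n)" by metis
  have agree: "AE s in lebesgue. s \<in> {-r..<real (Suc n)} \<longrightarrow> ys m s = ys n s" if nm: "n \<le> m" for n m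
  proof (rule uniq)
    show "Linf {-r..<real (Suc n)} UNIV (ys m)"
      by (rule Linf_sub[of "{-r..<real (Suc m)}"]) (use ys[of m] nm in \<open>auto simp: P_def\<close>)
    show "Linf {-r..<real (Suc n)} UNIV (ys n)" using ys[of n] by (simp add: P_def)
    show "Linf {-r..real (Suc n)} D d" by (rule dT)
    have "real (Suc n) > -r" using r_pos by (smt (verit) of_nat_0_le_iff)
    then show "Linf {-r..real (Suc n)} U u" by (rule uT)
    show "AE s in lebesgue. s \<in> {-r..<0} \<longrightarrow> ys m s = ys n s"
      using ys[of m] ys[of n] by (intro AE_I2) (auto simp: P_def)
    have "AE t in lebesgue. t \<in> {0..<real (Suc m)} \<longrightarrow> ys m t = f (shift (ys m) t) (shift d t) (shift u t)"
      using ys[of m] by (simp add: P_def)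
    then show "AE t in lebesgue. t \<in> {0..<real (Suc n)} \<longrightarrow> ys m t = f (shift (ys m) t) (shift d t) (shift u t)"
      by eventually_elim (use nm in auto)
    show "AE t in lebesgue. t \<in> {0..<real (Suc n)} \<longrightarrow> ys n t = f (shift (ys n) t) (shift d t) (shift u t)"
      using ys[of n] by (simp add: P_def)
  qed
  have "\<forall>n. AE s in lebesgue. \<forall>m. n \<le> m \<longrightarrow> s \<in> {-r..<real (Suc n)} \<longrightarrow> ys m s = ys n s"
  proof
    fix n
    have "\<forall>m. AE s in lebesgue. n \<le> m \<longrightarrow> s \<in> {-r..<real (Suc n)} \<longrightarrow> ys m s = ys n s"
    proof
      fix m show "AE s in lebesgue. n \<le> m \<longrightarrow> s \<in> {-r..<real (Suc n)} \<longrightarrow> ys m s = ys n s"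
      proof (cases "n \<le> m")
        case True
        then show ?thesis using agree[OF True] by eventually_elim auto
      qed auto
    qed
    then show "AE s in lebesgue. \<forall>m. n \<le> m \<longrightarrow> s \<in> {-r..<real (Suc n)} \<longrightarrow> ys m s = ys n s"
      by (rule AE_all_countable[THEN iffD2])
  qed
  then have agreeall: "AE s in lebesgue. \<forall>n m. n \<le> m \<longrightarrow> s \<in> {-r..<real (Suc n)} \<longrightarrow> ys m s = ys n s"
    by (rule AE_all_countable[THEN iffD2])
  define x where "x s = lim (\<lambda>n. indicator {-r..<real (Suc n)} s *\<^sub>R ys n s)" for s
  have xeq: "AE s in lebesgue. \<forall>n. s \<in> {-r..<real (Suc n)} \<longrightarrow> x s = ys n s"
    using agreeall
  proof eventually_elim
    case (elim s)
    show ?case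
    proof (intro allI impI)
      fix n assume s: "s \<in> {-r..<real (Suc n)}"
      show "x s = ys n s" unfolding x_def
      proof (rule lim_eventually_const[of n], intro allI impI)
        fix m assume nm: "n \<le> m"
        then have "s \<in> {-r..<real (Suc m)}" using s by auto
        then show "indicator {-r..<real (Suc m)} s *\<^sub>R ys m s = ys n s" using elim nm s by simp
      qed
    qed
  qed
  have xmeas: "x \<in> borel_measurable lebesgue"
  proof -
    have m: "(\<lambda>s. indicator {-r..<real (Suc n)} s *\<^sub>R ys n s) \<in> borel_measurable lebesgue" for n
      using ys[of n] unfolding P_def Linf_def set_borel_measurable_def by auto
    show ?thesis unfolding x_def by (rule borel_measurable_lim_metric[OF m])
  qed
  have xLinf: "Linf {-r..T} UNIV x" if "T > -r" for T
  proof -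
    define n where "n = nat \<lceil>T\<rceil>"
    have Tn: "T < real (Suc n)" unfolding n_def by linarith
    obtain B where B: "0 \<le> B" "AE s in lebesgue. s \<in> {-r..<real (Suc n)} \<longrightarrow> ys n s \<in> UNIV \<and> norm (ys n s) \<le> B"
      using Linf_bound[of "{-r..<real (Suc n)}" UNIV "ys n"] ys[of n] by (auto simp: P_def)
    have "AE s in lebesgue. s \<in> {-r..T} \<longrightarrow> x s \<in> UNIV \<and> norm (x s) \<le> B"
      using B(2) xeq
    proof eventually_elim
      case (elim s)
      show ?case
      proof
        assume "s \<in> {-r..T}"
        then have s: "s \<in> {-r..<real (Suc n)}" using Tn by auto
        then have "x s = ys n s" using elim by blast
        then show "x s \<in> UNIV \<and> norm (x s) \<le> B" using elim s by auto
      qed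
    qed
    then show ?thesis by (intro Linf_meas_global[OF xmeas]) auto
  qed
  have sol: "is_solution_inf r f x0 d u x"
    unfolding is_solution_inf_def
  proof (intro conjI)
    show "Linf_loc (- r) UNIV x" unfolding Linf_loc_def using xLinf by auto
    show "AE s in lebesgue. s \<in> {-r..<0} \<longrightarrow> x s = x0 s"
      using xeq by eventually_elim (use ys[of 0] in \<open>auto simp: P_def\<close>)
    have fixall: "AE t in lebesgue. \<forall>n. t \<in> {0..<real (Suc n)} \<longrightarrow> ys n t = f (shift (ys n) t) (shift d t) (shift u t)"
      using ys by (intro AE_all_countable[THEN iffD2, OF allI]) (simp add: P_def)
    show "AE t in lebesgue. 0 \<le> t \<longrightarrow> x t = f (shift x t) (shift d t) (shift u t)"
      using fixall xeq
    proof eventually_elim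
      case (elim t)
      show ?case
      proof
        assume t: "0 \<le> t"
        define n where "n = nat \<lceil>t\<rceil>"
        have tn: "t < real (Suc n)" unfolding n_def by linarith
        have "x t = ys n t" using elim t tn r_pos by auto
        also have "\<dots> = f (shift (ys n) t) (shift d t) (shift u t)" using elim t tn by auto
        also have "\<dots> = f (shift x t) (shift d t) (shift u t)"
        proof (rule f_welldef)
          show "Linf {-r..<0} UNIV (shift (ys n) t)"
            by (rule Linf_shift[of "{-r..<real (Suc n)}"]) (use ys[of n] t tn in \<open>auto simp: P_def\<close>)
          have "real (Suc n) > -r" using r_pos by (smt (verit) of_nat_0_le_iff)
          then show "Linf {-r..<0} UNIV (shift x t)"
            by (intro Linf_shift[OF xLinf[of "real (Suc n)"]]) (use t tn in auto)
          show "Linf {-r..0} D (shift d t)" "Linf {-r..0} D (shift d t)"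
            by (rule Linf_shift[OF d]; use t in auto)+
          have "t + 1 > -r" using t r_pos by simp
          then show "Linf {-r..0} U (shift u t)" "Linf {-r..0} U (shift u t)"
            by (rule Linf_shift[OF uT]; use t in auto)+
          show "AE s in lebesgue. s \<in> {-r..<0} \<longrightarrow> shift (ys n) t s = shift x t s"
            using AE_translate[OF xeq, of t]
          proof eventually_elim
            case (elim s)
            show ?case
            proof
              assume s: "s \<in> {-r..<0}"
              have ts: "t + s \<in> {-r..<real (Suc n)}" using s t tn by auto
              have "t + s \<in> {-r..<real (Suc n)} \<longrightarrow> x (t + s) = ys n (t + s)" using elim by blast
              then show "shift (ys n) t s = shift x t s" using ts by (simp add: shift_def)
            qed
          qed
        qed auto
        finally show "x t = f (shift x t) (shift d t) (shift u t)" .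
      qed
    qed
  qed
  then show ?thesis by blast
qed

end


lemma cont_majorant:
  fixes \<rho> :: "real \<Rightarrow> real"
  assumes mono: "mono_on {0..} \<rho>" and nn: "\<And>c. 0 \<le> c \<Longrightarrow> 0 \<le> \<rho> c"
  shows "\<exists>g. continuous_on {0..} g \<and> nondecr_nonneg g \<and> (\<forall>c\<ge>0. \<rho> c \<le> g c)"
proof -
  define p where "p c = \<rho> (max c 0)" for c
  have pm: "mono p" unfolding p_def mono_def using mono by (auto simp: mono_on_def)
  have pnn: "0 \<le> p c" for c using nn by (simp add: p_def)
  have int: "p integrable_on {a..b}" for a b
    using pm by (intro integrable_on_mono_on) (auto simp: mono_on_def mono_def)
  define g where "g c = integral {c..c+1} p" for c
  define I where "I x = integral {-1..x} p" for x
  have gI: "g x = I (x + 1) - I x" if "-1 \<le> x" for x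
  proof -
    have "integral {-1..x} p + integral {x..x+1} p = integral {-1..x+1} p"
      apply (rule Henstock_Kurzweil_Integration.integral_combine[of "-1" x "x+1" p])
      using that int by auto
    then show ?thesis by (simp add: g_def I_def)
  qed
  have Icont: "isCont I x" if "-1 < x" for x
  proof -
    have "continuous_on {-1..x+1} I" unfolding I_def by (rule indefinite_integral_continuous_1[OF int])
    moreover have "x \<in> interior {-1..x+1}" using that by simp
    ultimately show ?thesis by (rule continuous_on_interior)
  qed
  have "continuous_on {0..} (\<lambda>x. I (x + 1) - I x)"
  proof (intro continuous_at_imp_continuous_on ballI)
    fix x :: real assume "x \<in> {0..}"
    then have x: "0 \<le> x" by simp
    have c1: "isCont (\<lambda>x. x + 1) x" by simp
    have "isCont (\<lambda>x. I (x + 1)) x"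
      using isCont_o2[OF c1, of I] Icont[of "x+1"] x by auto
    then show "isCont (\<lambda>x. I (x + 1) - I x) x" using Icont[of x] x by (intro continuous_intros) auto
  qed
  then have gc: "continuous_on {0..} g" by (rule continuous_on_cong[THEN iffD1, rotated 2]) (auto simp: gI)
  have gge: "p c \<le> g c" for c
  proof -
    have "integral {c..c+1} (\<lambda>_. p c) \<le> integral {c..c+1} p"
      by (rule integral_le) (use int pm in \<open>auto simp: mono_def\<close>)
    then show ?thesis by (simp add: g_def)
  qed
  have gmono: "g c \<le> g c'" if "c \<le> c'" for c c'
  proof -
    have "g c = integral {0..1} (p \<circ> (+) c)" using integral_shift_Icc_real[of 0 1 p c] by (simp add: g_def add.commute)
    also have "\<dots> \<le> integral {0..1} (p \<circ> (+) c')"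
    proof (rule integral_le)
      show "p \<circ> (+) c integrable_on {0..1}" "p \<circ> (+) c' integrable_on {0..1}"
        using pm by (auto intro!: integrable_on_mono_on simp: mono_on_def mono_def)
      show "(p \<circ> (+) c) x \<le> (p \<circ> (+) c') x" for x using pm that by (auto simp: mono_def)
    qed
    also have "\<dots> = g c'" using integral_shift_Icc_real[of 0 1 p c'] by (simp add: g_def add.commute)
    finally show ?thesis .
  qed
  show ?thesis
  proof (intro exI conjI allI impI)
    show "continuous_on {0..} g" by (rule gc)
    show "nondecr_nonneg g" unfolding nondecr_nonneg_def mono_on_def
      using gmono gge pnn by (meson order_trans)
    fix c :: real assume "0 \<le> c"
    then show "\<rho> c \<le> g c" using gge[of c] by (simp add: p_def)
  qed
qed


context sys begin

definition phi :: "real \<Rightarrow> real" where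
  "phi c = Sup {norm z | z. V z \<le> c}"

lemma phi_bdd: "bdd_above {norm z | z. V z \<le> c}"
proof -
  obtain R where "\<forall>z. V z \<le> c \<longrightarrow> norm z \<le> R" using V_level by blast
  then show ?thesis by (auto intro!: bdd_aboveI[of _ R])
qed

lemma phi_ne: "0 \<le> c \<Longrightarrow> {norm z | z. V z \<le> c} \<noteq> {}"
  using V_posdef(1) by (auto intro!: exI[of _ 0])

lemma phi_upper: "V z \<le> c \<Longrightarrow> norm z \<le> phi c"
  unfolding phi_def by (rule cSup_upper[OF _ phi_bdd]) auto

lemma phi_nonneg: "0 \<le> c \<Longrightarrow> 0 \<le> phi c"
  using phi_upper[of 0 c] V_posdef(1) by simp

lemma phi_mono: "0 \<le> c \<Longrightarrow> c \<le> c' \<Longrightarrow> phi c \<le> phi c'"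
  unfolding phi_def by (rule cSup_subset_mono[OF phi_ne phi_bdd]) auto

lemma small_V:
  assumes e: "0 < e"
  shows "\<exists>\<eta>>0. \<forall>z. V z \<le> \<eta> \<longrightarrow> norm z < e"
proof -
  obtain R1 where R1: "\<And>z. V z \<le> 1 \<Longrightarrow> norm z \<le> R1" using V_level[of 1] by blast
  define K where "K = {z::real^'n. e \<le> norm z \<and> norm z \<le> R1}"
  have cK: "compact K"
  proof -
    have "K = {z. e \<le> norm z} \<inter> cball 0 R1" by (auto simp: K_def)
    moreover have "closed {z::real^'n. e \<le> norm z}" by (intro closed_Collect_le) (auto intro: continuous_intros)
    ultimately show ?thesis by (metis compact_cball closed_Int_compact)
  qed
  show ?thesis
  proof (cases "K = {}")
    case True
    show ?thesis
    proof (intro exI conjI allI impI)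
      fix z assume "V z \<le> 1"
      then have "norm z \<le> R1" by (rule R1)
      moreover have "z \<notin> K" using True by simp
      then have "\<not> (e \<le> norm z \<and> norm z \<le> R1)" by (simp add: K_def)
      ultimately show "norm z < e" by linarith
    qed simp
  next
    case False
    obtain z0 where z0: "z0 \<in> K" "\<And>y. y \<in> K \<Longrightarrow> V z0 \<le> V y"
      using continuous_attains_inf[OF cK False continuous_on_subset[OF V_cont]] by auto
    have "z0 \<noteq> 0" using z0(1) e by (auto simp: K_def)
    then have m: "V z0 > 0" by (rule V_posdef(2))
    show ?thesis
    proof (intro exI conjI allI impI)
      show "0 < min 1 (V z0 / 2)" using m by simp
      fix z assume z: "V z \<le> min 1 (V z0 / 2)"
      show "norm z < e"
      proof (rule ccontr)
        assume "\<not> norm z < e"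
        moreover have "norm z \<le> R1" using z by (intro R1) auto
        ultimately have "z \<in> K" by (auto simp: K_def)
        then have "V z0 \<le> V z" by (rule z0(2))
        then show False using z m by auto
      qed
    qed
  qed
qed

lemma phi_small: "0 < e \<Longrightarrow> \<exists>\<eta>>0. phi \<eta> < e"
proof -
  assume e: "0 < e"
  obtain \<eta> where \<eta>: "\<eta> > 0" "\<And>z. V z \<le> \<eta> \<Longrightarrow> norm z < e/2" using small_V[of "e/2"] e by auto
  have "phi \<eta> \<le> e/2" unfolding phi_def
    by (rule cSup_least[OF phi_ne]) (use \<eta> in \<open>auto intro: less_imp_le\<close>)
  then show ?thesis using \<eta> e by (intro exI[of _ \<eta>]) auto
qed

lemma V_small: "0 < \<eta> \<Longrightarrow> \<exists>\<delta>>0. \<forall>z. norm z \<le> \<delta> \<longrightarrow> V z \<le> \<eta>"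
proof -
  assume \<eta>: "0 < \<eta>"
  have "isCont V 0" using V_cont by (simp add: continuous_on_eq_continuous_at)
  then obtain \<delta> where \<delta>: "\<delta> > 0" "\<And>z. dist z 0 < \<delta> \<Longrightarrow> dist (V z) (V 0) < \<eta>"
    unfolding continuous_at_eps_delta using \<eta> by blast
  show ?thesis
  proof (intro exI conjI allI impI)
    show "0 < \<delta>/2" using \<delta> by simp
    fix z :: "real^'n" assume "norm z \<le> \<delta>/2"
    then have "dist (V z) (V 0) < \<eta>" using \<delta> by (intro \<delta>(2)) auto
    then show "V z \<le> \<eta>" using V_posdef(1) by (simp add: dist_real_def)
  qed
qed

lemma gain_exists: "\<exists>g. continuous_on {0..} g \<and> nondecr_nonneg g \<and> (\<forall>c\<ge>0. phi (2 * \<gamma> c / (1 - lam)) \<le> g c)"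
proof (rule cont_majorant)
  have g0: "0 \<le> \<gamma> c" if "0 \<le> c" for c using \<gamma>_mono that unfolding nondecr_nonneg_def by auto
  show "mono_on {0..} (\<lambda>c. phi (2 * \<gamma> c / (1 - lam)))"
    unfolding mono_on_def
  proof (intro allI impI)
    fix c c' :: real assume "c \<in> {0..} \<and> c' \<in> {0..} \<and> c \<le> c'"
    then have "\<gamma> c \<le> \<gamma> c'" "0 \<le> \<gamma> c" using \<gamma>_mono g0 unfolding nondecr_nonneg_def mono_on_def by auto
    then show "phi (2 * \<gamma> c / (1 - lam)) \<le> phi (2 * \<gamma> c' / (1 - lam))"
      using lam_range by (intro phi_mono) (auto intro!: divide_right_mono)
  qed
  show "0 \<le> phi (2 * \<gamma> c / (1 - lam))" if "0 \<le> c" for c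
    using g0[OF that] lam_range by (intro phi_nonneg) auto
qed

end

context sys begin

lemma est:
  fixes x0 x :: "real \<Rightarrow> real ^ 'n"
  assumes g: "continuous_on {0..} g" "nondecr_nonneg g" "\<forall>c\<ge>0. phi (2 * \<gamma> c / (1 - lam)) \<le> g c"
    and x0: "Linf {-r..<0} UNIV x0" and d: "Linf {-r..} D d" and u: "Linf_loc (-r) U u"
    and sol: "is_solution_inf r f x0 d u x"
    and t: "0 \<le> t" and k: "real k * r \<le> t"
    and S: "0 \<le> S" "AE s in lebesgue. s \<in> {-r..<0} \<longrightarrow> V (x0 s) \<le> S"
  shows "Lnorm {-r..<0} (shift x t) - (SUP s\<in>{0..t}. g (Lnorm {-r..0} (shift u s))) \<le> phi (2 * lam^k * S)"
proof -
  have xL: "Linf_loc (-r) UNIV x" and xx0: "AE s in lebesgue. s \<in> {-r..<0} \<longrightarrow> x s = x0 s"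
    and xf: "AE s in lebesgue. 0 \<le> s \<longrightarrow> x s = f (shift x s) (shift d s) (shift u s)"
    using sol by (auto simp: is_solution_inf_def)
  define v where "v s = V (x s)" for s
  have tr: "t > -r" using t r_pos by simp
  have xT: "Linf {-r..t} UNIV x" using xL tr by (simp add: Linf_loc_def)
  have uT: "Linf {-r..t} U u" using u tr by (simp add: Linf_loc_def)
  have EBt: "EB {-r..t} v"
  proof -
    obtain B where B: "0 \<le> B" "AE s in lebesgue. s \<in> {-r..t} \<longrightarrow> x s \<in> UNIV \<and> norm (x s) \<le> B"
      using Linf_bound[OF xT] by blast
    obtain S' where S': "\<And>z. norm z \<le> B \<Longrightarrow> V z \<le> S'" using V_ball[of B] by blast
    have "AE s in lebesgue. s \<in> {-r..t} \<longrightarrow> v s \<le> S'"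
      using B(2) by eventually_elim (use S' in \<open>auto simp: v_def\<close>)
    then show ?thesis unfolding EB_def by blast
  qed
  have EBA: "EB A v" if "A \<subseteq> {-r..t}" for A using EB_mono[OF EBt that] .
  obtain Bu where Bu: "0 \<le> Bu" "AE s in lebesgue. s \<in> {-r..t} \<longrightarrow> u s \<in> U \<and> norm (u s) \<le> Bu"
    using Linf_bound[OF uT] by blast
  define ell where "ell s = Lnorm {-r..0} (shift u s)" for s
  have su: "Linf {-r..0} U (shift u s)" if "s \<in> {0..t}" for s by (rule Linf_shift[OF uT]) (use that in auto)
  have ellb: "0 \<le> ell s \<and> ell s \<le> Bu" if "s \<in> {0..t}" for s
  proof
    show "0 \<le> ell s" unfolding ell_def by (rule Lnorm_nonneg[OF su[OF that]])
    have "AE \<sigma> in lebesgue. \<sigma> \<in> {-r..0} \<longrightarrow> norm (shift u s \<sigma>) \<le> Bu"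
      using AE_translate[OF Bu(2), of s] by eventually_elim (use that in \<open>auto simp: shift_def\<close>)
    then show "ell s \<le> Bu" unfolding ell_def using Bu(1) by (intro Lnorm_le) auto
  qed
  define ls where "ls = Sup (ell ` {0..t})"
  have bddl: "bdd_above (ell ` {0..t})" using ellb by (auto intro!: bdd_aboveI[of _ Bu])
  have nel: "ell ` {0..t} \<noteq> {}" using t by auto
  have ellle: "ell s \<le> ls" if "s \<in> {0..t}" for s unfolding ls_def by (rule cSup_upper[OF _ bddl]) (use that in auto)
  have ls0: "0 \<le> ls" using ellle[of 0] ellb[of 0] t by auto
  define \<Gamma> where "\<Gamma> = \<gamma> ls"
  have \<Gamma>0: "0 \<le> \<Gamma>" using \<gamma>_mono ls0 unfolding \<Gamma>_def nondecr_nonneg_def by auto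
  have \<gamma>\<Gamma>: "\<gamma> (ell s) \<le> \<Gamma>" if "s \<in> {0..t}" for s
    using \<gamma>_mono ellle[OF that] ellb[OF that] ls0 unfolding \<Gamma>_def nondecr_nonneg_def mono_on_def by auto
  have lam0: "0 \<le> lam" "lam < 1" using lam_range by auto
  have vb: "AE s in lebesgue. s \<in> {0..<t} \<longrightarrow> (\<forall>A. {s-r..<s} \<subseteq> A \<longrightarrow> A \<subseteq> {-r..t} \<longrightarrow> v s \<le> lam * ess_sup_on A v + \<Gamma>)"
    using xf
  proof eventually_elim
    case (elim s)
    show ?case
    proof (intro impI allI)
      fix A assume s: "s \<in> {0..<t}" and A1: "{s-r..<s} \<subseteq> A" and A2: "A \<subseteq> {-r..t}"
      have sx: "Linf {-r..<0} UNIV (shift x s)" by (rule Linf_shift[OF xT]) (use s in auto)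
      have sd: "Linf {-r..0} D (shift d s)" by (rule Linf_shift[OF d]) (use s in auto)
      have "v s = V (f (shift x s) (shift d s) (shift u s))" using elim s by (simp add: v_def)
      also have "\<dots> \<le> lam * ess_sup_on {-r..<0} (\<lambda>\<sigma>. V (shift x s \<sigma>)) + \<gamma> (ell s)"
        unfolding ell_def by (rule dissip[OF sx sd su]) (use s in auto)
      also have "\<dots> \<le> lam * ess_sup_on A v + \<Gamma>"
      proof (intro add_mono mult_left_mono)
        show "\<gamma> (ell s) \<le> \<Gamma>" using s by (intro \<gamma>\<Gamma>) auto
        show "0 \<le> lam" by (rule lam0)
        have "AE \<sigma> in lebesgue. \<sigma> \<in> {-r..<0} \<longrightarrow> V (shift x s \<sigma>) \<le> ess_sup_on A v"
          using AE_translate[OF ess_AE[OF EBA[OF A2]], of s]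
        proof eventually_elim
          case (elim \<sigma>)
          show ?case
          proof
            assume "\<sigma> \<in> {-r..<0}"
            then have "s + \<sigma> \<in> {s-r..<s}" by auto
            then have "s + \<sigma> \<in> A" using A1 by blast
            then show "V (shift x s \<sigma>) \<le> ess_sup_on A v" using elim by (simp add: shift_def v_def)
          qed
        qed
        then show "ess_sup_on {-r..<0} (\<lambda>\<sigma>. V (shift x s \<sigma>)) \<le> ess_sup_on A v"
          by (intro ess_le ess_nonneg[OF EBA[OF A2]])
      qed
      finally show "v s \<le> lam * ess_sup_on A v + \<Gamma>" .
    qed
  qed
  have step: "ess_sup_on {a+r..<t} v \<le> lam * ess_sup_on {a..<t} v + \<Gamma>" if a: "-r \<le> a" for a
  proof (rule ess_le)
    show "0 \<le> lam * ess_sup_on {a..<t} v + \<Gamma>"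
    proof -
      have "{a..<t} \<subseteq> {-r..t}" using a by auto
      then have "0 \<le> ess_sup_on {a..<t} v" by (rule ess_nonneg[OF EBA])
      then show ?thesis using lam0 \<Gamma>0 by simp
    qed
    show "AE s in lebesgue. s \<in> {a+r..<t} \<longrightarrow> v s \<le> lam * ess_sup_on {a..<t} v + \<Gamma>"
      using vb
    proof eventually_elim
      case (elim s)
      show ?case
      proof
        assume s: "s \<in> {a+r..<t}"
        then have "s \<in> {0..<t}" using a by auto
        then have "\<forall>A. {s-r..<s} \<subseteq> A \<longrightarrow> A \<subseteq> {-r..t} \<longrightarrow> v s \<le> lam * ess_sup_on A v + \<Gamma>" using elim by blast
        moreover have "{s-r..<s} \<subseteq> {a..<t}" "{a..<t} \<subseteq> {-r..t}" using s a by auto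
        ultimately show "v s \<le> lam * ess_sup_on {a..<t} v + \<Gamma>" by blast
      qed
    qed
  qed
  have base: "ess_sup_on {-r..<t} v \<le> S + \<Gamma> / (1 - lam)"
  proof -
    define Q where "Q = ess_sup_on {-r..<t} v"
    have Qm: "Q \<le> max S (lam * Q + \<Gamma>)" unfolding Q_def
    proof (rule ess_le)
      show "0 \<le> max S (lam * ess_sup_on {-r..<t} v + \<Gamma>)" using S(1) by simp
      show "AE s in lebesgue. s \<in> {-r..<t} \<longrightarrow> v s \<le> max S (lam * ess_sup_on {-r..<t} v + \<Gamma>)"
        using vb xx0 S(2)
      proof eventually_elim
        case (elim s)
        show ?case
        proof
          assume s: "s \<in> {-r..<t}"
          show "v s \<le> max S (lam * ess_sup_on {-r..<t} v + \<Gamma>)"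
          proof (cases "s < 0")
            case True then show ?thesis using elim s by (auto simp: v_def)
          next
            case False
            then have "s \<in> {0..<t}" using s by auto
            then have "\<forall>A. {s-r..<s} \<subseteq> A \<longrightarrow> A \<subseteq> {-r..t} \<longrightarrow> v s \<le> lam * ess_sup_on A v + \<Gamma>" using elim by blast
            moreover have "{s-r..<s} \<subseteq> {-r..<t}" "{-r..<t} \<subseteq> {-r..t}" using s \<open>s \<in> {0..<t}\<close> by auto
            ultimately have "v s \<le> lam * ess_sup_on {-r..<t} v + \<Gamma>" by blast
            then show ?thesis by simp
          qed
        qed
      qed
    qed
    moreover have "0 \<le> \<Gamma> / (1 - lam)" using \<Gamma>0 lam0 by simp
    moreover have "Q \<le> \<Gamma> / (1 - lam)" if "Q \<le> lam * Q + \<Gamma>"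
    proof -
      have "(1 - lam) * Q \<le> \<Gamma>" using that by (simp add: algebra_simps)
      then show ?thesis using lam0 by (simp add: pos_le_divide_eq mult.commute)
    qed
    moreover have "Q \<le> S \<or> Q \<le> lam * Q + \<Gamma>" using Qm by (simp add: le_max_iff_disj)
    ultimately have "Q \<le> S + \<Gamma> / (1 - lam)" by (meson add_increasing2 add_increasing order_trans S(1))
    then show ?thesis unfolding Q_def .
  qed
  have ind: "ess_sup_on {real j * r - r..<t} v \<le> lam^j * S + \<Gamma> / (1 - lam)" for j
  proof (induction j)
    case 0 then show ?case using base by simp
  next
    case (Suc j)
    have a: "-r \<le> real j * r - r" using r_pos by simp
    have "ess_sup_on {real (Suc j) * r - r..<t} v = ess_sup_on {(real j * r - r) + r..<t} v"
      by (simp add: algebra_simps)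
    also have "\<dots> \<le> lam * ess_sup_on {real j * r - r..<t} v + \<Gamma>" by (rule step[OF a])
    also have "\<dots> \<le> lam * (lam^j * S + \<Gamma> / (1 - lam)) + \<Gamma>"
      using Suc lam0 by (intro add_mono mult_left_mono) auto
    also have "\<dots> = lam^(Suc j) * S + \<Gamma> / (1 - lam)"
      using lam0 by (simp add: field_simps)
    finally show ?case .
  qed
  define E where "E = lam^k * S + \<Gamma> / (1 - lam)"
  have E0: "0 \<le> E" using S(1) lam0 \<Gamma>0 by (simp add: E_def)
  have Et: "ess_sup_on {t-r..<t} v \<le> E"
  proof -
    have "ess_sup_on {t-r..<t} v \<le> ess_sup_on {real k * r - r..<t} v"
    proof (rule ess_mono_set[OF EBA])
      have "0 \<le> real k * r" using r_pos by simp
      then show "{real k * r - r..<t} \<subseteq> {-r..t}" by auto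
      show "{t-r..<t} \<subseteq> {real k * r - r..<t}" using k by auto
    qed
    then show ?thesis using ind[of k] by (simp add: E_def)
  qed
  have tsub: "{t-r..<t} \<subseteq> {-r..t}" using t by auto
  have nx: "Lnorm {-r..<0} (shift x t) \<le> phi E"
  proof (rule Lnorm_le)
    show "0 \<le> phi E" using E0 by (rule phi_nonneg)
    have "AE \<sigma> in lebesgue. \<sigma> \<in> {-r..<0} \<longrightarrow> V (x (t + \<sigma>)) \<le> E"
      using AE_translate[OF ess_AE[OF EBA[of "{t-r..<t}", OF tsub]], of t]
      by eventually_elim (use Et t in \<open>auto simp: v_def\<close>)
    then show "AE \<sigma> in lebesgue. \<sigma> \<in> {-r..<0} \<longrightarrow> norm (shift x t \<sigma>) \<le> phi E"
      by eventually_elim (auto simp: shift_def intro: phi_upper)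
  qed
  have split: "phi E \<le> phi (2 * lam^k * S) + phi (2 * \<Gamma> / (1 - lam))"
  proof -
    have A0: "0 \<le> lam^k * S" using S(1) lam0 by simp
    have B0: "0 \<le> \<Gamma> / (1 - lam)" using \<Gamma>0 lam0 by simp
    have "0 \<le> 2 * lam^k * S" using A0 by (simp add: mult.commute)
    then have p1: "0 \<le> phi (2 * lam^k * S)" by (rule phi_nonneg)
    have "0 \<le> 2 * \<Gamma> / (1 - lam)" using B0 by simp
    then have p2: "0 \<le> phi (2 * \<Gamma> / (1 - lam))" by (rule phi_nonneg)
    show ?thesis
    proof (cases "lam^k * S \<le> \<Gamma> / (1 - lam)")
      case True
      have "E \<le> 2 * \<Gamma> / (1 - lam)" using True unfolding E_def by linarith
      then have "phi E \<le> phi (2 * \<Gamma> / (1 - lam))" by (rule phi_mono[OF E0])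
      then show ?thesis using p1 by linarith
    next
      case False
      have "E \<le> 2 * lam^k * S" using False unfolding E_def by linarith
      then have "phi E \<le> phi (2 * lam^k * S)" by (rule phi_mono[OF E0])
      then show ?thesis using p2 by linarith
    qed
  qed
  have gmono: "g y \<le> g y'" if "0 \<le> y" "y \<le> y'" for y y'
    using g(2) that unfolding nondecr_nonneg_def mono_on_def by auto
  have bddg: "bdd_above ((\<lambda>s. g (ell s)) ` {0..t})"
    using ellb gmono by (auto intro!: bdd_aboveI[of _ "g Bu"])
  have Gge: "g ls \<le> (SUP s\<in>{0..t}. g (ell s))"
  proof (rule field_le_epsilon)
    fix e :: real assume e: "0 < e"
    have "continuous (at ls within {0..}) g" using g(1) ls0 by (simp add: continuous_on_eq_continuous_within)
    then obtain \<delta> where \<delta>: "\<delta> > 0" "\<And>y. y \<in> {0..} \<Longrightarrow> dist y ls < \<delta> \<Longrightarrow> dist (g y) (g ls) < e"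
      unfolding continuous_within_eps_delta using e by blast
    have "ls - \<delta> < Sup (ell ` {0..t})" using \<delta> by (simp add: ls_def)
    then obtain s where s: "s \<in> {0..t}" "ls - \<delta> < ell s" using less_cSup_iff[OF nel bddl] by auto
    have "dist (ell s) ls < \<delta>" using s ellle[OF s(1)] by (simp add: dist_real_def)
    then have "dist (g (ell s)) (g ls) < e" using ellb[OF s(1)] by (intro \<delta>(2)) auto
    moreover have "g (ell s) \<le> (SUP s\<in>{0..t}. g (ell s))" by (rule cSup_upper[OF _ bddg]) (use s in auto)
    ultimately show "g ls \<le> (SUP s\<in>{0..t}. g (ell s)) + e" by (simp add: dist_real_def)
  qed
  have "phi (2 * \<Gamma> / (1 - lam)) \<le> g ls" using g(3) ls0 by (simp add: \<Gamma>_def)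
  with Gge nx split show ?thesis unfolding ell_def by linarith
qed

end

context sys begin

lemma x0_V:
  assumes x0: "Linf {-r..<0} UNIV x0" and e: "Lnorm {-r..<0} x0 \<le> e" and \<alpha>: "\<And>z. norm z \<le> e \<Longrightarrow> V z \<le> \<alpha>"
  shows "AE s in lebesgue. s \<in> {-r..<0} \<longrightarrow> V (x0 s) \<le> \<alpha>"
proof -
  have "AE s in lebesgue. s \<in> {-r..<0} \<longrightarrow> norm (x0 s) \<le> Lnorm {-r..<0} x0"
    unfolding Lnorm_def by (rule ess_AE[OF Linf_EB[OF x0]])
  then show ?thesis by eventually_elim (use e \<alpha> in \<open>auto intro: order_trans\<close>)
qed

lemma ISS_loc: "ISS r f D U"
  unfolding ISS_def Let_def
proof (intro conjI)
  show "\<forall>x0 d u. Linf {-r..<0} UNIV x0 \<and> Linf {-r..} D d \<and> Linf_loc (-r) U u \<longrightarrow> (\<exists>x. is_solution_inf r f x0 d u x)"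
    using exist_global by blast
  obtain g where g: "continuous_on {0..} g" "nondecr_nonneg g" "\<forall>c\<ge>0. phi (2 * \<gamma> c / (1 - lam)) \<le> g c"
    using gain_exists by blast
  have lam0: "0 < lam" "lam < 1" using lam_range by auto
  show "\<exists>g. continuous_on {0..} g \<and> nondecr_nonneg g \<and>
    (\<forall>\<epsilon>>0. \<exists>C. \<forall>x0 d u x t. (Linf {-r..<0} UNIV x0 \<and> Linf {-r..} D d \<and> Linf_loc (-r) U u) \<and> is_solution_inf r f x0 d u x \<and>
          Lnorm {-r..<0} x0 \<le> \<epsilon> \<and> 0 \<le> t \<longrightarrow> Lnorm {-r..<0} (shift x t) - (SUP s\<in>{0..t}. g (Lnorm {-r..0} (shift u s))) \<le> C) \<and>
    (\<forall>\<epsilon>>0. \<exists>\<delta>>0. \<exists>c<\<epsilon>. \<forall>x0 d u x t. (Linf {-r..<0} UNIV x0 \<and> Linf {-r..} D d \<and> Linf_loc (-r) U u) \<and> is_solution_inf r f x0 d u x \<and>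
          Lnorm {-r..<0} x0 \<le> \<delta> \<and> 0 \<le> t \<longrightarrow> Lnorm {-r..<0} (shift x t) - (SUP s\<in>{0..t}. g (Lnorm {-r..0} (shift u s))) \<le> c) \<and>
    (\<forall>\<epsilon>>0. \<forall>R\<ge>0. \<exists>\<tau>>0. \<exists>c<\<epsilon>. \<forall>x0 d u x t. (Linf {-r..<0} UNIV x0 \<and> Linf {-r..} D d \<and> Linf_loc (-r) U u) \<and> is_solution_inf r f x0 d u x \<and>
          Lnorm {-r..<0} x0 \<le> R \<and> \<tau> \<le> t \<longrightarrow> Lnorm {-r..<0} (shift x t) - (SUP s\<in>{0..t}. g (Lnorm {-r..0} (shift u s))) \<le> c)"
  proof (intro exI[of _ g] conjI allI impI g(1) g(2))
    fix \<epsilon> :: real assume "0 < \<epsilon>"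
    obtain \<alpha> where \<alpha>: "0 \<le> \<alpha>" "\<And>z. norm z \<le> \<epsilon> \<Longrightarrow> V z \<le> \<alpha>" using V_ball[of \<epsilon>] by blast
    show "\<exists>C. \<forall>x0 d u x t. (Linf {-r..<0} UNIV x0 \<and> Linf {-r..} D d \<and> Linf_loc (-r) U u) \<and> is_solution_inf r f x0 d u x \<and>
          Lnorm {-r..<0} x0 \<le> \<epsilon> \<and> 0 \<le> t \<longrightarrow> Lnorm {-r..<0} (shift x t) - (SUP s\<in>{0..t}. g (Lnorm {-r..0} (shift u s))) \<le> C"
    proof (intro exI[of _ "phi (2 * lam^0 * \<alpha>)"] allI impI)
      fix x0 x :: "real \<Rightarrow> real ^ 'n" and d :: "real \<Rightarrow> real ^ 'm1" and u :: "real \<Rightarrow> real ^ 'm2" and t :: real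
      assume A: "(Linf {-r..<0} UNIV x0 \<and> Linf {-r..} D d \<and> Linf_loc (-r) U u) \<and> is_solution_inf r f x0 d u x \<and>
          Lnorm {-r..<0} x0 \<le> \<epsilon> \<and> 0 \<le> t"
      show "Lnorm {-r..<0} (shift x t) - (SUP s\<in>{0..t}. g (Lnorm {-r..0} (shift u s))) \<le> phi (2 * lam^0 * \<alpha>)"
        by (rule est[OF g]) (use A \<alpha> x0_V[of x0 \<epsilon> \<alpha>] in auto)
    qed
  next
    fix \<epsilon> :: real assume e: "0 < \<epsilon>"
    obtain \<eta> where \<eta>: "\<eta> > 0" "phi \<eta> < \<epsilon>" using phi_small[OF e] by blast
    obtain \<delta> where \<delta>: "\<delta> > 0" "\<And>z. norm z \<le> \<delta> \<Longrightarrow> V z \<le> \<eta>/2" using V_small[of "\<eta>/2"] \<eta> by auto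
    show "\<exists>\<delta>>0. \<exists>c<\<epsilon>. \<forall>x0 d u x t. (Linf {-r..<0} UNIV x0 \<and> Linf {-r..} D d \<and> Linf_loc (-r) U u) \<and> is_solution_inf r f x0 d u x \<and>
          Lnorm {-r..<0} x0 \<le> \<delta> \<and> 0 \<le> t \<longrightarrow> Lnorm {-r..<0} (shift x t) - (SUP s\<in>{0..t}. g (Lnorm {-r..0} (shift u s))) \<le> c"
    proof (rule exI[of _ \<delta>], intro conjI exI[of _ "phi \<eta>"] allI impI)
      show "0 < \<delta>" "phi \<eta> < \<epsilon>" using \<delta> \<eta> by auto
      fix x0 x :: "real \<Rightarrow> real ^ 'n" and d :: "real \<Rightarrow> real ^ 'm1" and u :: "real \<Rightarrow> real ^ 'm2" and t :: real
      assume A: "(Linf {-r..<0} UNIV x0 \<and> Linf {-r..} D d \<and> Linf_loc (-r) U u) \<and> is_solution_inf r f x0 d u x \<and>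
          Lnorm {-r..<0} x0 \<le> \<delta> \<and> 0 \<le> t"
      have "Lnorm {-r..<0} (shift x t) - (SUP s\<in>{0..t}. g (Lnorm {-r..0} (shift u s))) \<le> phi (2 * lam^0 * (\<eta>/2))"
        by (rule est[OF g]) (use A \<eta> x0_V[of x0 \<delta> "\<eta>/2"] \<delta> in auto)
      then show "Lnorm {-r..<0} (shift x t) - (SUP s\<in>{0..t}. g (Lnorm {-r..0} (shift u s))) \<le> phi \<eta>" by simp
    qed
  next
    fix \<epsilon> R :: real assume e: "0 < \<epsilon>" and R: "0 \<le> R"
    obtain \<eta> where \<eta>: "\<eta> > 0" "phi \<eta> < \<epsilon>" using phi_small[OF e] by blast
    obtain \<alpha> where \<alpha>: "0 \<le> \<alpha>" "\<And>z. norm z \<le> R \<Longrightarrow> V z \<le> \<alpha>" using V_ball[of R] by blast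
    obtain K where K: "lam^K < \<eta> / (2 * \<alpha> + 1)"
      using real_arch_pow_inv[of "\<eta> / (2 * \<alpha> + 1)" lam] \<eta> \<alpha> lam0 by auto
    have "2 * lam^K * \<alpha> \<le> 2 * (\<eta> / (2 * \<alpha> + 1)) * \<alpha>"
      using K \<alpha> lam0 by (intro mult_right_mono) auto
    also have "\<dots> \<le> \<eta>" using \<eta> \<alpha> by (simp add: field_simps)
    finally have K2: "2 * lam^K * \<alpha> \<le> \<eta>" .
    show "\<exists>\<tau>>0. \<exists>c<\<epsilon>. \<forall>x0 d u x t. (Linf {-r..<0} UNIV x0 \<and> Linf {-r..} D d \<and> Linf_loc (-r) U u) \<and> is_solution_inf r f x0 d u x \<and>
          Lnorm {-r..<0} x0 \<le> R \<and> \<tau> \<le> t \<longrightarrow> Lnorm {-r..<0} (shift x t) - (SUP s\<in>{0..t}. g (Lnorm {-r..0} (shift u s))) \<le> c"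
    proof (rule exI[of _ "real (Suc K) * r"], intro conjI exI[of _ "phi \<eta>"] allI impI)
      show "0 < real (Suc K) * r" using r_pos by simp
      show "phi \<eta> < \<epsilon>" by (rule \<eta>(2))
      fix x0 x :: "real \<Rightarrow> real ^ 'n" and d :: "real \<Rightarrow> real ^ 'm1" and u :: "real \<Rightarrow> real ^ 'm2" and t :: real
      assume A: "(Linf {-r..<0} UNIV x0 \<and> Linf {-r..} D d \<and> Linf_loc (-r) U u) \<and> is_solution_inf r f x0 d u x \<and>
          Lnorm {-r..<0} x0 \<le> R \<and> real (Suc K) * r \<le> t"
      define k where "k = nat \<lfloor>t / r\<rfloor>"
      have t0: "0 \<le> t" using A r_pos by (smt (verit) of_nat_0_le_iff mult_nonneg_nonneg)
      have tr: "real (Suc K) \<le> t / r" using A r_pos by (simp add: pos_le_divide_eq)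
      have kK: "K \<le> k" unfolding k_def using tr by linarith
      have "real k \<le> t / r" unfolding k_def using t0 r_pos by simp
      then have kr: "real k * r \<le> t" using r_pos by (simp add: pos_le_divide_eq)
      have "Lnorm {-r..<0} (shift x t) - (SUP s\<in>{0..t}. g (Lnorm {-r..0} (shift u s))) \<le> phi (2 * lam^k * \<alpha>)"
        by (rule est[OF g]) (use A \<alpha> x0_V[of x0 R \<alpha>] t0 kr in auto)
      also have "\<dots> \<le> phi \<eta>"
      proof (rule phi_mono)
        show "0 \<le> 2 * lam^k * \<alpha>" using \<alpha> lam0 by simp
        have "lam^k \<le> lam^K" using kK lam0 by (intro power_decreasing) auto
        then have "2 * lam^k * \<alpha> \<le> 2 * lam^K * \<alpha>" using \<alpha> by (intro mult_right_mono) auto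
        then show "2 * lam^k * \<alpha> \<le> \<eta>" using K2 by linarith
      qed
      finally show "Lnorm {-r..<0} (shift x t) - (SUP s\<in>{0..t}. g (Lnorm {-r..0} (shift u s))) \<le> phi \<eta>" .
    qed
  qed
qed

end

theorem theorem2p6:
  fixes r :: real
    and D :: "(real ^ 'm1) set" and U :: "(real ^ 'm2) set"
    and f :: "(real \<Rightarrow> real ^ 'n) \<Rightarrow> (real \<Rightarrow> real ^ 'm1) \<Rightarrow> (real \<Rightarrow> real ^ 'm2) \<Rightarrow> real ^ 'n"
    and V :: "real ^ 'n \<Rightarrow> real" and \<gamma> :: "real \<Rightarrow> real" and lam :: real
  assumes r_pos: "r > 0"
    and D_compact: "compact D"
    and U_lc: "locally compact U" and U_0: "0 \<in> U"
    and f_welldef: "\<And>x x' d d' u u'. Linf {-r..<0} UNIV x \<Longrightarrow> Linf {-r..<0} UNIV x' \<Longrightarrow>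
        Linf {-r..0} D d \<Longrightarrow> Linf {-r..0} D d' \<Longrightarrow> Linf {-r..0} U u \<Longrightarrow> Linf {-r..0} U u' \<Longrightarrow>
        (AE s in lebesgue. s \<in> {-r..<0} \<longrightarrow> x s = x' s) \<Longrightarrow>
        (AE s in lebesgue. s \<in> {-r..0} \<longrightarrow> d s = d' s) \<Longrightarrow>
        (AE s in lebesgue. s \<in> {-r..0} \<longrightarrow> u s = u' s) \<Longrightarrow> f x d u = f x' d' u'"
    and H1: "\<exists>a M N. nondecr_nonneg a \<and> nondecr_nonneg M \<and> nondecr_nonneg N \<and>
        (\<forall>R>0. \<forall>x y d u. Linf {-r..<0} UNIV x \<and> Linf {-r..<0} UNIV y \<and>
            Linf {-r..0} D d \<and> Linf {-r..0} U u \<and>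
            Lnorm {-r..<0} x \<le> R \<and> Lnorm {-r..<0} y \<le> R \<and>
            Lnorm {-r..0} (\<lambda>s. (d s, u s)) \<le> R \<longrightarrow>
          (\<forall>h\<in>{0<..<r}. norm (f x d u - f y d u) \<le>
              N R * h * Lnorm {-h..<0} (\<lambda>s. x s - y s) + M R * Lnorm {-r..<-h} (\<lambda>s. x s - y s)) \<and>
          norm (f x d u) \<le> a R)"
    and H2: "\<And>\<delta> x d u. \<delta> > 0 \<Longrightarrow> Linf {-r..<\<delta>} UNIV x \<Longrightarrow> Linf {-r..\<delta>} D d \<Longrightarrow> Linf {-r..\<delta>} U u \<Longrightarrow>
        Linf {-r..<\<delta>} UNIV (\<lambda>t. if t < 0 then x t else f (shift x t) (shift d t) (shift u t))"
    and H3: "\<exists>b. Kinf b \<and> (\<forall>x d u. Linf {-r..<0} UNIV x \<and> Linf {-r..0} D d \<and> Linf {-r..0} U u \<longrightarrow>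
        norm (f x d u) \<le> b (max (Lnorm {-r..<0} x) (Lnorm {-r..0} u)))"
    and V_cont: "continuous_on UNIV V"
    and V_nonneg: "\<And>z. V z \<ge> 0"
    and V_posdef: "V 0 = 0" "\<And>z. z \<noteq> 0 \<Longrightarrow> V z > 0"
    and V_radunb: "filterlim V at_top at_infinity"
    and \<gamma>_cont: "continuous_on {0..} \<gamma>" and \<gamma>_mono: "nondecr_nonneg \<gamma>"
    and lam_range: "0 < lam" "lam < 1"
    and dissip: "\<And>x d u. Linf {-r..<0} UNIV x \<Longrightarrow> Linf {-r..0} D d \<Longrightarrow> Linf {-r..0} U u \<Longrightarrow>
        V (f x d u) \<le> lam * ess_sup_on {-r..<0} (\<lambda>s. V (x s)) + \<gamma> (Lnorm {-r..0} u)"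
  shows "ISS r f D U"
proof -
  obtain a M N where aMN: "nondecr_nonneg a" "nondecr_nonneg M" "nondecr_nonneg N"
    and H1': "\<forall>R>0. \<forall>x y d u. Linf {-r..<0} UNIV x \<and> Linf {-r..<0} UNIV y \<and>
            Linf {-r..0} D d \<and> Linf {-r..0} U u \<and>
            Lnorm {-r..<0} x \<le> R \<and> Lnorm {-r..<0} y \<le> R \<and>
            Lnorm {-r..0} (\<lambda>s. (d s, u s)) \<le> R \<longrightarrow>
          (\<forall>h\<in>{0<..<r}. norm (f x d u - f y d u) \<le>
              N R * h * Lnorm {-h..<0} (\<lambda>s. x s - y s) + M R * Lnorm {-r..<-h} (\<lambda>s. x s - y s)) \<and>
          norm (f x d u) \<le> a R"
    using H1 by blast
  have "sys r D U f V \<gamma> lam a M N"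
    by (unfold_locales) (fact r_pos f_welldef aMN H1' H2 V_cont V_nonneg V_posdef V_radunb \<gamma>_cont \<gamma>_mono lam_range dissip)+
  then show ?thesis by (rule sys.ISS_loc)
qed

end
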